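(* Let $\{w^k\}$ be generated by the L-GADMM iteration and $\{\bar w^k\}$ be the auxiliary sequence. Then for every $k\ge0$, $$(w^k-\bar w^k)^\top M^\top HM\big\{(w^k-\bar w^k)-(w^{k+1}-\bar w^{k+1})\big\}\ \ge\ \tfrac12\big\|(w^k-\bar w^k)-(w^{k+1}-\bar w^{k+1})\big\|_{Q^\top+Q}^2.$$
   Context: Standing setting. Let $m\ge 2$, $\ell$, $n_1,\dots,n_m$ be positive integers. For $i=1,\dots,m$ let $\theta_i:\mathbb{R}^{n_i}\to\mathbb{R}$ be convex, $\mathcal{X}_i\subseteq\mathbb{R}^{n_i}$ nonempty closed convex, $A_i\in\mathbb{R}^{\ell\times n_i}$ of full column rank, and $b\in\mathbb{R}^\ell$. Problem (P): $\min\{\sum_{i=1}^m\theta_i(x_i):\sum_{i=1}^mA_ix_i=b,\ x_i\in\mathcal{X}_i\}$, assumed to have a nonempty solution set. Write $u=(x_1,\dots,x_m)$, $w=(x_1,\dots,x_m,y)$ with $y\in\mathbb{R}^\ell$, $\theta(u)=\sum_i\theta_i(x_i)$, $F(w)=(-A_1^\top y,\dots,-A_m^\top y,\ \sum_iA_ix_i-b)$, $\mathcal{W}=\mathcal{X}_1\times\cdots\times\mathcal{X}_m\times\mathbb{R}^\ell$, and $\mathcal{W}^*=\{w^*\in\mathcal{W}:\theta(u)-\theta(u^* )+(w-w^* )^\top F(w^* )\ge0\ \forall w\in\mathcal{W}\}$ (nonempty). For symmetric $G$, $\|v\|_G^2:=v^\top Gv$; $\|\cdot\|$ is the Euclidean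 norm. Vectors are partitioned as $w=(R,x_m,y)$ with $R=(x_1,\dots,x_{m-1})$. Parameters: $\rho>0$, $\gamma\in(0,2)$, symmetric positive definite $P_i\in\mathbb{R}^{n_i\times n_i}$ ($i=1,\dots,m$) such that $G_1\succ0$, where $G_1$ is the symmetric block matrix with diagonal blocks $P_1,\dots,P_{m-1}$ and $(i,j)$ block $-\rho A_i^\top A_j$ for $i\ne j$, $1\le i,j\le m-1$. Matrices (w.r.t. the partition $(R,x_m,y)$): $Q=\begin{pmatrix}G_1&0&0\\0&\rho A_m^\top A_m+P_m&(1-\gamma)A_m^\top\\0&-A_m&\frac1\rho I_\ell\end{pmatrix}$, $M=\begin{pmatrix}I&0&0\\0&I_{n_m}&0\\0&-\rho A_m&\gamma I_\ell\end{pmatrix}$, $H=\begin{pmatrix}G_1&0&0\\0&P_m+\frac\rho\gamma A_m^\top A_m&\frac{1-\gamma}\gamma A_m^\top\\0&\frac{1-\gamma}\gamma A_m&\frac1{\gamma\rho}I_\ell\end{pmatrix}$, $N=Q^\top+Q-M^\top HM$. L-GADMM iteration: from an arbitrary $w^0=(x_1^0,\dots,x_m^0,y^0)\in\mathcal{W}$, for $k=0,1,2,\dots$: $x_j^{k+1}=\arg\min_{x_j\in\mathcal{X}_j}\{\theta_j(x_j)+\frac\rho2\|A_jx_j+\sum_{i=1,i\ne j}^mA_ix_i^k-b-\frac{y^k}\rho\|^2+\frac12\|x_j-x_j^k\|_{P_j}^2\}$ for $j=1,\dots,m-1$; $x_m^{k+1}=\arg\min_{x_m\in\mathcal{X}_m}\{\theta_m(x_m)+\frac\rho2\|\gamma\sum_{i=1}^{m-1}A_ix_i^{k+1}+(1-\gamma)(b-A_mx_m^k)+A_mx_m-b-\frac{y^k}\rho\|^2+\frac12\|x_m-x_m^k\|_{P_m}^2\}$;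 $y^{k+1}=y^k-\rho\big(\gamma\sum_{i=1}^{m-1}A_ix_i^{k+1}+(1-\gamma)(b-A_mx_m^k)+A_mx_m^{k+1}-b\big)$. Auxiliary sequence: $\bar w^k=(\bar x_1^k,\dots,\bar x_m^k,\bar y^k)$ with $\bar x_i^k=x_i^{k+1}$ ($i=1,\dots,m$) and $\bar y^k=y^k-\rho(\sum_{i=1}^{m-1}A_ix_i^{k+1}+A_mx_m^k-b)$; $\bar u^k=(\bar x_1^k,\dots,\bar x_m^k)$, $R^k=(x_1^k,\dots,x_{m-1}^k)$, $\bar R^k=(\bar x_1^k,\dots,\bar x_{m-1}^k)$. *)

theory Defs
  imports Complex_Main "Jordan_Normal_Form.DL_Rank"
begin

(* Block offsets: block i (0-based) of a vector/matrix with block sizes d occupies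
   the index range [offs d i, offs d i + d i). *)
definition offs :: "(nat \<Rightarrow> nat) \<Rightarrow> nat \<Rightarrow> nat" where
  "offs d i = (\<Sum>j<i. d j)"

definition blk :: "(nat \<Rightarrow> nat) \<Rightarrow> nat \<Rightarrow> nat" where
  "blk d r = (LEAST i. r < offs d (Suc i))"

definition block_mat :: "(nat \<Rightarrow> nat) \<Rightarrow> nat \<Rightarrow> (nat \<Rightarrow> nat \<Rightarrow> real mat) \<Rightarrow> real mat" where
  "block_mat d p B = mat (offs d p) (offs d p)
     (\<lambda>(r, c). B (blk d r) (blk d c) $$ (r - offs d (blk d r), c - offs d (blk d c)))"

definition stack_vec :: "(nat \<Rightarrow> nat) \<Rightarrow> nat \<Rightarrow> (nat \<Rightarrow> real vec) \<Rightarrow> real vec" where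
  "stack_vec d p v = vec (offs d p) (\<lambda>r. v (blk d r) $ (r - offs d (blk d r)))"

definition vsum :: "nat \<Rightarrow> (nat \<Rightarrow> real vec) \<Rightarrow> nat set \<Rightarrow> real vec" where
  "vsum l f I = vec l (\<lambda>r. \<Sum>i\<in>I. f i $ r)"

definition qnorm :: "real mat \<Rightarrow> real vec \<Rightarrow> real" where
  "qnorm G v = v \<bullet> (G *\<^sub>v v)"

definition sqnorm :: "real vec \<Rightarrow> real" where
  "sqnorm v = v \<bullet> v"

definition sym_pos_def :: "nat \<Rightarrow> real mat \<Rightarrow> bool" where
  "sym_pos_def n G \<longleftrightarrow> G \<in> carrier_mat n n \<and> transpose_mat G = G \<and>
     (\<forall>v\<in>carrier_vec n. v \<noteq> 0\<^sub>v n \<longrightarrow> v \<bullet> (G *\<^sub>v v) > 0)"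

definition convex_fun_vec :: "nat \<Rightarrow> (real vec \<Rightarrow> real) \<Rightarrow> bool" where
  "convex_fun_vec n f \<longleftrightarrow> (\<forall>x\<in>carrier_vec n. \<forall>y\<in>carrier_vec n. \<forall>t::real. 0 \<le> t \<and> t \<le> 1 \<longrightarrow>
     f (t \<cdot>\<^sub>v x + (1 - t) \<cdot>\<^sub>v y) \<le> t * f x + (1 - t) * f y)"

definition convex_set_vec :: "nat \<Rightarrow> real vec set \<Rightarrow> bool" where
  "convex_set_vec n X \<longleftrightarrow> X \<subseteq> carrier_vec n \<and> (\<forall>x\<in>X. \<forall>y\<in>X. \<forall>t::real. 0 \<le> t \<and> t \<le> 1 \<longrightarrow>
     t \<cdot>\<^sub>v x + (1 - t) \<cdot>\<^sub>v y \<in> X)"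

definition closed_set_vec :: "nat \<Rightarrow> real vec set \<Rightarrow> bool" where
  "closed_set_vec n X \<longleftrightarrow> X \<subseteq> carrier_vec n \<and> (\<forall>s x. (\<forall>k. s k \<in> X) \<and> x \<in> carrier_vec n \<and>
     (\<forall>r<n. (\<lambda>k. s k $ r) \<longlonglongrightarrow> x $ r) \<longrightarrow> x \<in> X)"

end

theory Submission
  imports Defs
begin


lemma offs_Suc: "offs d (Suc i) = offs d i + d i" by (simp add: offs_def)
lemma offs_0[simp]: "offs d 0 = 0" by (simp add: offs_def)
lemma offs_mono: "i \<le> j \<Longrightarrow> offs d i \<le> offs d j"
  unfolding offs_def by (rule sum_mono2) auto

lemma blk_props:
  assumes r: "r < offs d p"
  shows "blk d r < p" "offs d (blk d r) \<le> r" "r < offs d (blk d r) + d (blk d r)"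
proof -
  have p: "p > 0" using r by (cases p) auto
  have ex: "r < offs d (Suc (p - 1))" using r p by simp
  have le: "blk d r \<le> p - 1" unfolding blk_def by (rule Least_le) (rule ex)
  then show "blk d r < p" using p by simp
  have "r < offs d (Suc (blk d r))" unfolding blk_def by (rule LeastI) (rule ex)
  then show "r < offs d (blk d r) + d (blk d r)" by (simp add: offs_Suc)
  show "offs d (blk d r) \<le> r"
  proof (cases "blk d r")
    case 0 then show ?thesis by simp
  next
    case (Suc j)
    have "\<not> r < offs d (Suc j)"
    proof
      assume "r < offs d (Suc j)"
      then have "blk d r \<le> j" unfolding blk_def by (rule Least_le)
      then show False using Suc by simp
    qed
    then show ?thesis using Suc by simp
  qed
qed

lemma blk_offs: assumes s: "s < d i" shows "blk d (offs d i + s) = i"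
  unfolding blk_def
proof (rule Least_equality)
  show "offs d i + s < offs d (Suc i)" using s by (simp add: offs_Suc)
next
  fix j assume j: "offs d i + s < offs d (Suc j)"
  show "i \<le> j"
  proof (rule ccontr)
    assume "\<not> i \<le> j" then have "Suc j \<le> i" by simp
    then have "offs d (Suc j) \<le> offs d i" by (rule offs_mono)
    then show False using j by simp
  qed
qed

lemma sum_lessThan_add_split: "(\<Sum>r<a+(b::nat). f r) = (\<Sum>r<a. f r) + (\<Sum>s<b. f (a + s))"
  by (induction b) (auto simp: add.assoc)

lemma reindex_blk:
  "(\<Sum>r<offs d p. g (blk d r) (r - offs d (blk d r))) = (\<Sum>i<p. \<Sum>s<d i. g i s)"
proof (induction p)
  case 0 then show ?case by simp
next
  case (Suc p)
  have "(\<Sum>r<offs d (Suc p). g (blk d r) (r - offs d (blk d r)))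
      = (\<Sum>r<offs d p. g (blk d r) (r - offs d (blk d r))) + (\<Sum>s<d p. g (blk d (offs d p + s)) (offs d p + s - offs d (blk d (offs d p + s))))"
    unfolding offs_Suc by (rule sum_lessThan_add_split)
  also have "(\<Sum>s<d p. g (blk d (offs d p + s)) (offs d p + s - offs d (blk d (offs d p + s)))) = (\<Sum>s<d p. g p s)"
    by (rule sum.cong) (auto simp: blk_offs)
  finally show ?case using Suc by simp
qed

lemma dim_stack[simp]: "dim_vec (stack_vec d p v) = offs d p"
  by (simp add: stack_vec_def)

lemma stack_carrier: "stack_vec d p v \<in> carrier_vec (offs d p)"
  by (rule carrier_vecI) simp

lemma index_stack: "r < offs d p \<Longrightarrow> stack_vec d p v $ r = v (blk d r) $ (r - offs d (blk d r))"
  by (simp add: stack_vec_def)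

lemma stack_dot:
  assumes "\<And>i. i < p \<Longrightarrow> dim_vec (w i) = d i"
  shows "stack_vec d p v \<bullet> stack_vec d p w = (\<Sum>i<p. v i \<bullet> w i)"
proof -
  have "stack_vec d p v \<bullet> stack_vec d p w = (\<Sum>r<offs d p. stack_vec d p v $ r * stack_vec d p w $ r)"
    by (simp add: scalar_prod_def atLeast0LessThan)
  also have "\<dots> = (\<Sum>r<offs d p. (\<lambda>i s. v i $ s * w i $ s) (blk d r) (r - offs d (blk d r)))"
    by (rule sum.cong) (auto simp: index_stack)
  also have "\<dots> = (\<Sum>i<p. \<Sum>s<d i. v i $ s * w i $ s)" by (rule reindex_blk)
  also have "\<dots> = (\<Sum>i<p. v i \<bullet> w i)"
    by (rule sum.cong) (auto simp: scalar_prod_def atLeast0LessThan assms)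
  finally show ?thesis .
qed

lemma stack_minus:
  assumes "\<And>i. i < p \<Longrightarrow> v i \<in> carrier_vec (d i)" "\<And>i. i < p \<Longrightarrow> w i \<in> carrier_vec (d i)"
  shows "stack_vec d p v - stack_vec d p w = stack_vec d p (\<lambda>i. v i - w i)"
proof (rule eq_vecI)
  fix r assume "r < dim_vec (stack_vec d p (\<lambda>i. v i - w i))"
  then have r: "r < offs d p" by simp
  note b = blk_props[OF r]
  have "w (blk d r) \<in> carrier_vec (d (blk d r))" using assms(2) b(1) by blast
  moreover have "r - offs d (blk d r) < d (blk d r)" using b by linarith
  ultimately show "(stack_vec d p v - stack_vec d p w) $ r = stack_vec d p (\<lambda>i. v i - w i) $ r"
    using r by (simp add: index_stack)
qed simp

lemma mat_vec_index_sum: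
  assumes "A \<in> carrier_mat nr nc" "v \<in> carrier_vec nc" "i < nr"
  shows "(A *\<^sub>v v) $ i = (\<Sum>c<nc. A $$ (i, c) * v $ c)"
  using assms by (auto simp: scalar_prod_def atLeast0LessThan intro!: sum.cong)

lemma block_mat_carrier: "block_mat d p B \<in> carrier_mat (offs d p) (offs d p)"
  by (simp add: block_mat_def)

lemma block_mat_index: "r < offs d p \<Longrightarrow> c < offs d p \<Longrightarrow>
   block_mat d p B $$ (r, c) = B (blk d r) (blk d c) $$ (r - offs d (blk d r), c - offs d (blk d c))"
  by (simp add: block_mat_def)



lemma block_mult:
  assumes B: "\<And>i j. i < p \<Longrightarrow> j < p \<Longrightarrow> B i j \<in> carrier_mat (d i) (d j)"
    and v: "\<And>j. j < p \<Longrightarrow> v j \<in> carrier_vec (d j)"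
    and u: "\<And>i. i < p \<Longrightarrow> u i \<in> carrier_vec (d i)"
    and comp: "\<And>i s. i < p \<Longrightarrow> s < d i \<Longrightarrow> u i $ s = (\<Sum>j<p. (B i j *\<^sub>v v j) $ s)"
  shows "block_mat d p B *\<^sub>v stack_vec d p v = stack_vec d p u"
proof (rule eq_vecI)
  fix r assume "r < dim_vec (stack_vec d p u)"
  then have r: "r < offs d p" by simp
  note b = blk_props[OF r]
  define i where "i = blk d r"
  define r' where "r' = r - offs d i"
  have i: "i < p" and r': "r' < d i" using b unfolding i_def r'_def by linarith+
  have "(block_mat d p B *\<^sub>v stack_vec d p v) $ r
      = (\<Sum>c<offs d p. block_mat d p B $$ (r, c) * stack_vec d p v $ c)"
    by (rule mat_vec_index_sum[OF block_mat_carrier stack_carrier r])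
  also have "\<dots> = (\<Sum>c<offs d p. B i (blk d c) $$ (r', c - offs d (blk d c)) * stack_vec d p v $ c)"
    unfolding i_def r'_def by (intro sum.cong refl) (simp add: block_mat_index r)
  also have "\<dots> = (\<Sum>c<offs d p. (\<lambda>j s. B i j $$ (r', s) * v j $ s) (blk d c) (c - offs d (blk d c)))"
    by (rule sum.cong) (auto simp: index_stack)
  also have "\<dots> = (\<Sum>j<p. \<Sum>s<d j. B i j $$ (r', s) * v j $ s)" by (rule reindex_blk)
  also have "\<dots> = (\<Sum>j<p. (B i j *\<^sub>v v j) $ r')"
  proof (rule sum.cong)
    fix j assume "j \<in> {..<p}"
    then have j: "j < p" by simp
    have Bij: "B i j \<in> carrier_mat (d i) (d j)" using B i j by blast
    have vj: "v j \<in> carrier_vec (d j)" using v j by blast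
    show "(\<Sum>s<d j. B i j $$ (r', s) * v j $ s) = (B i j *\<^sub>v v j) $ r'"
      using Bij vj r' by (simp add: scalar_prod_def atLeast0LessThan)
  qed simp
  also have "\<dots> = u i $ r'" using comp[OF i r'] by simp
  also have "\<dots> = stack_vec d p u $ r" using r by (simp add: index_stack i_def r'_def)
  finally show "(block_mat d p B *\<^sub>v stack_vec d p v) $ r = stack_vec d p u $ r" .
qed (simp add: dim_mult_mat_vec block_mat_carrier[THEN carrier_matD(1)])



lemma small_pos_limit:
  fixes L K :: real
  assumes "\<And>t. 0 < t \<Longrightarrow> t \<le> 1 \<Longrightarrow> 0 \<le> t * L + t^2 * K"
  shows "0 \<le> L"
proof (rule ccontr)
  assume "\<not> 0 \<le> L" then have L: "L < 0" by simp
  define t where "t = min 1 (- L / (2 * (\<bar>K\<bar> + 1)))"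
  have t0: "0 < t" using L unfolding t_def by (simp add: field_simps)
  have t1: "t \<le> 1" unfolding t_def by simp
  have tle: "t \<le> - L / (2 * (\<bar>K\<bar> + 1))" unfolding t_def by simp
  have "t * (\<bar>K\<bar> + 1) \<le> - L / 2"
    using tle by (simp add: field_simps)
  then have "t * K \<le> - L / 2"
    using t0 by (smt (verit) mult_left_mono abs_ge_self)
  then have "L + t * K < 0" using L by linarith
  then have "t * (L + t * K) < 0" using t0 by (simp add: mult_pos_neg)
  moreover have "0 \<le> t * L + t^2 * K" using assms[OF t0 t1] .
  ultimately show False by (simp add: power2_eq_square algebra_simps)
qed

lemma vi_min:
  fixes \<theta> :: "real vec \<Rightarrow> real"
  assumes cf: "convex_fun_vec n \<theta>" and cs: "convex_set_vec n X" and xs: "xs \<in> X" and z: "z \<in> X"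
    and Am: "Am \<in> carrier_mat l n" and c: "c \<in> carrier_vec l" and P: "P \<in> carrier_mat n n"
    and Ps: "transpose_mat P = P" and x0: "x0 \<in> carrier_vec n"
    and min: "\<And>z. z \<in> X \<Longrightarrow> \<theta> xs + \<rho>/2 * sqnorm (Am *\<^sub>v xs + c) + 1/2 * qnorm P (xs - x0)
                 \<le> \<theta> z + \<rho>/2 * sqnorm (Am *\<^sub>v z + c) + 1/2 * qnorm P (z - x0)"
  shows "\<theta> z - \<theta> xs + \<rho> * ((Am *\<^sub>v (z - xs)) \<bullet> (Am *\<^sub>v xs + c)) + (z - xs) \<bullet> (P *\<^sub>v (xs - x0)) \<ge> 0"
proof -
  have Xc: "X \<subseteq> carrier_vec n" using cs unfolding convex_set_vec_def by blast
  have xsc: "xs \<in> carrier_vec n" and zc: "z \<in> carrier_vec n" using Xc xs z by auto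
  define h where "h = z - xs"
  define u where "u = Am *\<^sub>v xs + c"
  define g where "g = Am *\<^sub>v h"
  define q where "q = xs - x0"
  have hc: "h \<in> carrier_vec n" unfolding h_def using zc xsc by simp
  have uc: "u \<in> carrier_vec l" unfolding u_def using Am xsc c by simp
  have gc: "g \<in> carrier_vec l" unfolding g_def using Am hc by simp
  have qc: "q \<in> carrier_vec n" unfolding q_def using x0 xsc by simp
  have Phc: "P *\<^sub>v h \<in> carrier_vec n" using P hc by simp
  have Pqc: "P *\<^sub>v q \<in> carrier_vec n" using P qc by simp
  have sym: "q \<bullet> (P *\<^sub>v h) = h \<bullet> (P *\<^sub>v q)"
  proof -
    have "q \<bullet> (P *\<^sub>v h) = (transpose_mat P *\<^sub>v q) \<bullet> h"
      by (rule transpose_vec_mult_scalar[OF P hc qc, symmetric])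
    also have "\<dots> = (P *\<^sub>v q) \<bullet> h" using Ps by simp
    also have "\<dots> = h \<bullet> (P *\<^sub>v q)" by (rule comm_scalar_prod[OF Pqc hc])
    finally show ?thesis .
  qed
  define L where "L = \<theta> z - \<theta> xs + \<rho> * (g \<bullet> u) + h \<bullet> (P *\<^sub>v q)"
  define K where "K = \<rho>/2 * (g \<bullet> g) + 1/2 * (h \<bullet> (P *\<^sub>v h))"
  have key: "0 \<le> t * L + t^2 * K" if t0: "0 < t" and t1: "t \<le> 1" for t
  proof -
    define zt where "zt = t \<cdot>\<^sub>v z + (1 - t) \<cdot>\<^sub>v xs"
    have ztX: "zt \<in> X" using cs xs z t0 t1 unfolding convex_set_vec_def zt_def by simp
    have zt_eq: "zt = xs + t \<cdot>\<^sub>v h"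
      unfolding zt_def h_def using zc xsc by (intro eq_vecI) (auto simp: algebra_simps)
    have th: "\<theta> zt \<le> t * \<theta> z + (1 - t) * \<theta> xs"
      using cf zc xsc t0 t1 unfolding convex_fun_vec_def zt_def by simp
    have A1: "Am *\<^sub>v zt + c = u + t \<cdot>\<^sub>v g"
    proof -
      have "Am *\<^sub>v zt = Am *\<^sub>v xs + t \<cdot>\<^sub>v g"
        unfolding zt_eq g_def using Am xsc hc
        by (simp add: mult_add_distrib_mat_vec[OF Am] mult_mat_vec[OF Am])
      then show ?thesis unfolding u_def using Am xsc c gc
        by (intro eq_vecI) (auto simp: algebra_simps)
    qed
    have S: "sqnorm (Am *\<^sub>v zt + c) = u \<bullet> u + 2 * t * (g \<bullet> u) + t^2 * (g \<bullet> g)"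
    proof -
      have "sqnorm (u + t \<cdot>\<^sub>v g) = u \<bullet> u + t * (u \<bullet> g) + t * (g \<bullet> u) + t^2 * (g \<bullet> g)"
        unfolding sqnorm_def using uc gc
        by (simp add: add_scalar_prod_distrib[of _ l] scalar_prod_add_distrib[of _ l]
              power2_eq_square algebra_simps)
      then show ?thesis unfolding A1 using comm_scalar_prod[OF uc gc] by simp
    qed
    have S0: "sqnorm (Am *\<^sub>v xs + c) = u \<bullet> u" unfolding sqnorm_def u_def ..
    have Z: "zt - x0 = q + t \<cdot>\<^sub>v h"
      unfolding zt_eq q_def using xsc x0 hc by (intro eq_vecI) (auto simp: algebra_simps)
    have Qt: "qnorm P (zt - x0) = q \<bullet> (P *\<^sub>v q) + 2 * t * (h \<bullet> (P *\<^sub>v q)) + t^2 * (h \<bullet> (P *\<^sub>v h))"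
    proof -
      have "P *\<^sub>v (q + t \<cdot>\<^sub>v h) = P *\<^sub>v q + t \<cdot>\<^sub>v (P *\<^sub>v h)"
        using P qc hc by (simp add: mult_add_distrib_mat_vec[OF P] mult_mat_vec[OF P])
      then have "qnorm P (zt - x0) = (q + t \<cdot>\<^sub>v h) \<bullet> (P *\<^sub>v q + t \<cdot>\<^sub>v (P *\<^sub>v h))"
        unfolding qnorm_def Z by simp
      also have "\<dots> = q \<bullet> (P *\<^sub>v q) + t * (q \<bullet> (P *\<^sub>v h)) + t * (h \<bullet> (P *\<^sub>v q)) + t^2 * (h \<bullet> (P *\<^sub>v h))"
        using qc hc Pqc Phc
        by (simp add: add_scalar_prod_distrib[of _ n] scalar_prod_add_distrib[of _ n]
              power2_eq_square algebra_simps)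
      finally show ?thesis using sym by simp
    qed
    have Q0: "qnorm P (xs - x0) = q \<bullet> (P *\<^sub>v q)" unfolding qnorm_def q_def ..
    have m: "\<theta> xs + \<rho>/2 * sqnorm (Am *\<^sub>v xs + c) + 1/2 * qnorm P (xs - x0)
                 \<le> \<theta> zt + \<rho>/2 * sqnorm (Am *\<^sub>v zt + c) + 1/2 * qnorm P (zt - x0)"
      by (rule min[OF ztX])
    have "t * L + t^2 * K = t * \<theta> z + (1 - t) * \<theta> xs - \<theta> xs
          + (\<rho>/2 * (2 * t * (g \<bullet> u) + t^2 * (g \<bullet> g)) + 1/2 * (2 * t * (h \<bullet> (P *\<^sub>v q)) + t^2 * (h \<bullet> (P *\<^sub>v h))))"
      unfolding L_def K_def by (simp add: algebra_simps)
    then show ?thesis using m th unfolding S S0 Qt Q0 by (simp add: algebra_simps)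
  qed
  have "0 \<le> L" by (rule small_pos_limit) (rule key)
  then show ?thesis unfolding L_def g_def u_def h_def q_def by simp
qed



definition w3 :: "(nat \<Rightarrow> nat) \<Rightarrow> real vec \<Rightarrow> real vec \<Rightarrow> real vec \<Rightarrow> real vec" where
  "w3 d a b c = stack_vec d 3 (\<lambda>t. if t = 0 then a else if t = 1 then b else c)"

lemma sum3: "(\<Sum>j<(3::nat). f j) = f 0 + f 1 + (f 2 :: 'a :: comm_monoid_add)"
  by (simp add: eval_nat_numeral add.assoc)

lemma w3_carrier: "w3 d a b c \<in> carrier_vec (offs d 3)"
  unfolding w3_def by (rule stack_carrier)

lemma w3_dot:
  assumes "a' \<in> carrier_vec (d 0)" "b' \<in> carrier_vec (d 1)" "c' \<in> carrier_vec (d 2)"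
  shows "w3 d a b c \<bullet> w3 d a' b' c' = a \<bullet> a' + b \<bullet> b' + c \<bullet> c'"
proof -
  have "w3 d a b c \<bullet> w3 d a' b' c' = (\<Sum>i<(3::nat). (if i = 0 then a else if i = 1 then b else c) \<bullet> (if i = 0 then a' else if i = 1 then b' else c'))"
    unfolding w3_def
  proof (rule stack_dot)
    fix i :: nat assume "i < 3"
    then have "i = 0 \<or> i = 1 \<or> i = 2" by auto
    then show "dim_vec (if i = 0 then a' else if i = 1 then b' else c') = d i" using assms by auto
  qed
  then show ?thesis by (simp add: sum3)
qed

lemma w3_minus:
  assumes "a \<in> carrier_vec (d 0)" "b \<in> carrier_vec (d 1)" "c \<in> carrier_vec (d 2)"
    "a' \<in> carrier_vec (d 0)" "b' \<in> carrier_vec (d 1)" "c' \<in> carrier_vec (d 2)"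
  shows "w3 d a b c - w3 d a' b' c' = w3 d (a - a') (b - b') (c - c')"
proof -
  have "w3 d a b c - w3 d a' b' c' = stack_vec d 3 (\<lambda>i. (if i = 0 then a else if i = 1 then b else c) - (if i = 0 then a' else if i = 1 then b' else c'))"
    unfolding w3_def
  proof (rule stack_minus)
    fix i :: nat assume "i < 3"
    then have "i = 0 \<or> i = 1 \<or> i = 2" by auto
    then show "(if i = 0 then a else if i = 1 then b else c) \<in> carrier_vec (d i)"
      "(if i = 0 then a' else if i = 1 then b' else c') \<in> carrier_vec (d i)" using assms by auto
  qed
  also have "\<dots> = w3 d (a - a') (b - b') (c - c')"
    unfolding w3_def by (intro arg_cong[where f = "stack_vec d 3"] ext) auto
  finally show ?thesis .
qed

lemma zero_mat_mult_vec: "v \<in> carrier_vec nc \<Longrightarrow> 0\<^sub>m nr nc *\<^sub>v v = 0\<^sub>v nr"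
  by (intro eq_vecI) (auto simp: mat_vec_index_sum[of _ nr nc])

lemma w3_mult:
  assumes B: "\<And>i j. i < 3 \<Longrightarrow> j < 3 \<Longrightarrow> B i j \<in> carrier_mat (d i) (d j)"
    and abc: "a \<in> carrier_vec (d 0)" "b \<in> carrier_vec (d 1)" "c \<in> carrier_vec (d 2)"
  shows "block_mat d 3 B *\<^sub>v w3 d a b c
     = w3 d (B 0 0 *\<^sub>v a + B 0 1 *\<^sub>v b + B 0 2 *\<^sub>v c)
            (B 1 0 *\<^sub>v a + B 1 1 *\<^sub>v b + B 1 2 *\<^sub>v c)
            (B 2 0 *\<^sub>v a + B 2 1 *\<^sub>v b + B 2 2 *\<^sub>v c)"
  unfolding w3_def
proof (rule block_mult)
  let ?v = "\<lambda>t. if t = 0 then a else if t = 1 then b else c"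
  have i3: "\<And>i::nat. i < 3 \<Longrightarrow> i = 0 \<or> i = 1 \<or> i = 2" by auto
  show "\<And>i j. i < 3 \<Longrightarrow> j < 3 \<Longrightarrow> B i j \<in> carrier_mat (d i) (d j)" by (rule B)
  show "\<And>j. j < 3 \<Longrightarrow> ?v j \<in> carrier_vec (d j)" using abc i3 by fastforce
  have B': "B i j \<in> carrier_mat (d i) (d j)" if "i \<in> {0,1,2}" "j \<in> {0,1,2}" for i j
    using B that by auto
  have Bc: "B i 0 *\<^sub>v a + B i 1 *\<^sub>v b + B i 2 *\<^sub>v c \<in> carrier_vec (d i)" if "i \<in> {0,1,2}" for i
    using B'[OF that, of 0] B'[OF that, of 1] B'[OF that, of 2] abc by auto
  show "\<And>i. i < 3 \<Longrightarrow> (if i = 0 then B 0 0 *\<^sub>v a + B 0 1 *\<^sub>v b + B 0 2 *\<^sub>v c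
             else if i = 1 then B 1 0 *\<^sub>v a + B 1 1 *\<^sub>v b + B 1 2 *\<^sub>v c
             else B 2 0 *\<^sub>v a + B 2 1 *\<^sub>v b + B 2 2 *\<^sub>v c) \<in> carrier_vec (d i)"
    using Bc i3 by fastforce
  fix i s assume i: "i < 3" and s: "s < d i"
  have ii: "i \<in> {0,1,2}" using i3[OF i] by auto
  have c0: "B i 0 *\<^sub>v a \<in> carrier_vec (d i)" and c1: "B i 1 *\<^sub>v b \<in> carrier_vec (d i)"
    and c2: "B i 2 *\<^sub>v c \<in> carrier_vec (d i)"
    using B'[OF ii, of 0] B'[OF ii, of 1] B'[OF ii, of 2] abc by auto
  have dd: "dim_vec (B i 0 *\<^sub>v a) = d i" "dim_vec (B i 1 *\<^sub>v b) = d i" "dim_vec (B i 2 *\<^sub>v c) = d i"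
    using c0 c1 c2 carrier_vecD by blast+
  have "(B i 0 *\<^sub>v a + B i 1 *\<^sub>v b + B i 2 *\<^sub>v c) $ s = (B i 0 *\<^sub>v a + B i 1 *\<^sub>v b) $ s + (B i 2 *\<^sub>v c) $ s"
    using dd s by (intro index_add_vec(1)) simp
  also have "\<dots> = (B i 0 *\<^sub>v a) $ s + (B i 1 *\<^sub>v b) $ s + (B i 2 *\<^sub>v c) $ s"
    using dd s index_add_vec(1) by simp
  also have "\<dots> = (\<Sum>j<3. (B i j *\<^sub>v ?v j) $ s)" by (simp add: sum3)
  finally have "(B i 0 *\<^sub>v a + B i 1 *\<^sub>v b + B i 2 *\<^sub>v c) $ s = (\<Sum>j<3. (B i j *\<^sub>v ?v j) $ s)" .
  then show "(if i = 0 then B 0 0 *\<^sub>v a + B 0 1 *\<^sub>v b + B 0 2 *\<^sub>v c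
             else if i = 1 then B 1 0 *\<^sub>v a + B 1 1 *\<^sub>v b + B 1 2 *\<^sub>v c
             else B 2 0 *\<^sub>v a + B 2 1 *\<^sub>v b + B 2 2 *\<^sub>v c) $ s = (\<Sum>j<3. (B i j *\<^sub>v ?v j) $ s)"
    using ii by auto
qed

lemma vsum_carrier: "vsum l f I \<in> carrier_vec l"
  unfolding vsum_def by (rule carrier_vecI) simp

lemma index_vsum: "r < l \<Longrightarrow> vsum l f I $ r = (\<Sum>i\<in>I. f i $ r)"
  unfolding vsum_def by simp

lemma mat_vec_vsum:
  assumes M: "M \<in> carrier_mat nr l" and f: "\<And>i. i \<in> I \<Longrightarrow> f i \<in> carrier_vec l" and s: "s < nr"
  shows "(M *\<^sub>v vsum l f I) $ s = (\<Sum>i\<in>I. (M *\<^sub>v f i) $ s)"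
proof -
  have "(M *\<^sub>v vsum l f I) $ s = (\<Sum>c<l. M $$ (s, c) * (\<Sum>i\<in>I. f i $ c))"
    by (simp add: mat_vec_index_sum[OF M vsum_carrier s] index_vsum)
  also have "\<dots> = (\<Sum>i\<in>I. \<Sum>c<l. M $$ (s, c) * f i $ c)"
    by (simp add: sum_distrib_left sum.swap[of _ I])
  also have "\<dots> = (\<Sum>i\<in>I. (M *\<^sub>v f i) $ s)"
    by (rule sum.cong) (simp_all add: mat_vec_index_sum[OF M f s])
  finally show ?thesis .
qed

lemma dot_vsum:
  assumes w: "w \<in> carrier_vec l" and f: "\<And>i. i \<in> I \<Longrightarrow> f i \<in> carrier_vec l"
  shows "w \<bullet> vsum l f I = (\<Sum>i\<in>I. w \<bullet> f i)"
proof -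
  have "w \<bullet> vsum l f I = (\<Sum>r<l. w $ r * (\<Sum>i\<in>I. f i $ r))"
    using w by (simp add: scalar_prod_def atLeast0LessThan vsum_def)
  also have "\<dots> = (\<Sum>i\<in>I. \<Sum>r<l. w $ r * f i $ r)"
    by (simp add: sum_distrib_left sum.swap[of _ I])
  also have "\<dots> = (\<Sum>i\<in>I. w \<bullet> f i)"
  proof (rule sum.cong)
    fix i assume "i \<in> I"
    then have "dim_vec (f i) = l" using f carrier_vecD by blast
    then show "(\<Sum>r<l. w $ r * f i $ r) = w \<bullet> f i" by (simp add: scalar_prod_def atLeast0LessThan)
  qed simp
  finally show ?thesis .
qed

lemma vi_pair:
  fixes x0 x1 x2 w1 w2 :: "real vec" and A P :: "real mat" and \<rho> \<theta>1 \<theta>2 :: real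
  assumes VI1: "\<theta>2 - \<theta>1 + \<rho> * ((A *\<^sub>v (x2 - x1)) \<bullet> w1) + (x2 - x1) \<bullet> (P *\<^sub>v (x1 - x0)) \<ge> 0"
    and VI2: "\<theta>1 - \<theta>2 + \<rho> * ((A *\<^sub>v (x1 - x2)) \<bullet> w2) + (x1 - x2) \<bullet> (P *\<^sub>v (x2 - x1)) \<ge> 0"
    and x: "x0 \<in> carrier_vec n" "x1 \<in> carrier_vec n" "x2 \<in> carrier_vec n"
    and A: "A \<in> carrier_mat l n" and P: "P \<in> carrier_mat n n"
    and w: "w1 \<in> carrier_vec l" "w2 \<in> carrier_vec l"
  shows "(x1 - x2) \<bullet> (P *\<^sub>v ((x0 - x1) - (x1 - x2))) + (A *\<^sub>v (x1 - x2)) \<bullet> (\<rho> \<cdot>\<^sub>v (w2 - w1)) \<ge> 0"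
proof -
  define h where "h = x1 - x2"
  have hc: "h \<in> carrier_vec n" unfolding h_def using x by simp
  define g where "g = A *\<^sub>v h"
  have gc: "g \<in> carrier_vec l" unfolding g_def using A hc by simp
  have e1: "x2 - x1 = - h" unfolding h_def using x by (intro eq_vecI) auto
  have e2: "(x0 - x1) - (x1 - x2) = (x2 - x1) - (x1 - x0)" using x by (intro eq_vecI) auto
  have Ag: "A *\<^sub>v (x2 - x1) = - g" unfolding e1 g_def using A hc
    by (intro eq_vecI) (auto simp: scalar_prod_uminus_right)
  have p1: "P *\<^sub>v (x1 - x0) \<in> carrier_vec n" "P *\<^sub>v (x2 - x1) \<in> carrier_vec n" using P x by auto
  have d1: "(x2 - x1) \<bullet> (P *\<^sub>v (x1 - x0)) = - (h \<bullet> (P *\<^sub>v (x1 - x0)))"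
    unfolding e1 by (rule scalar_prod_uminus_left) (use P in \<open>simp add: carrier_vecD[OF hc]\<close>)
  have d2: "(- g) \<bullet> w1 = - (g \<bullet> w1)" using gc w by simp
  have d3: "h \<bullet> (P *\<^sub>v ((x0 - x1) - (x1 - x2))) = h \<bullet> (P *\<^sub>v (x2 - x1)) - h \<bullet> (P *\<^sub>v (x1 - x0))"
    unfolding e2 using P x hc p1
    by (simp add: mult_minus_distrib_mat_vec[OF P] scalar_prod_minus_distrib[of _ n])
  have d4: "g \<bullet> (\<rho> \<cdot>\<^sub>v (w2 - w1)) = \<rho> * (g \<bullet> w2) - \<rho> * (g \<bullet> w1)"
    using gc w by (simp add: scalar_prod_minus_distrib[of _ l] algebra_simps)
  show ?thesis using VI1 VI2 unfolding Ag d1 d2 h_def[symmetric] g_def[symmetric]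
    using d3 d4 by (simp add: h_def g_def)
qed



lemma smult_mat_vec:
  assumes M: "M \<in> carrier_mat nr nc" and v: "v \<in> carrier_vec nc"
  shows "(a \<cdot>\<^sub>m M) *\<^sub>v v = a \<cdot>\<^sub>v (M *\<^sub>v v)"
proof (rule eq_vecI)
  fix i assume "i < dim_vec (a \<cdot>\<^sub>v (M *\<^sub>v v))"
  then have i: "i < nr" using M by simp
  have Ma: "a \<cdot>\<^sub>m M \<in> carrier_mat nr nc" using M by simp
  show "((a \<cdot>\<^sub>m M) *\<^sub>v v) $ i = (a \<cdot>\<^sub>v (M *\<^sub>v v)) $ i"
    using M i by (simp add: mat_vec_index_sum[OF Ma v i] mat_vec_index_sum[OF M v i] sum_distrib_left mult.assoc)
qed (use M in simp)

lemma less3: "i < (3::nat) \<Longrightarrow> i = 0 \<or> i = 1 \<or> i = 2" by auto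

lemma Q_mult:
  assumes d: "d 0 = nR" "d 1 = nm" "d 2 = l" and G1: "G1 \<in> carrier_mat nR nR"
    and Am: "Am \<in> carrier_mat l nm" and Pm: "Pm \<in> carrier_mat nm nm"
    and a: "a \<in> carrier_vec nR" and b: "b \<in> carrier_vec nm" and c: "c \<in> carrier_vec l"
  shows "block_mat d 3 (\<lambda>i j.
             if i = 0 \<and> j = 0 then G1
             else if i = 1 \<and> j = 1 then \<rho> \<cdot>\<^sub>m (transpose_mat Am * Am) + Pm
             else if i = 1 \<and> j = 2 then (1 - \<gamma>) \<cdot>\<^sub>m transpose_mat Am
             else if i = 2 \<and> j = 1 then - Am
             else if i = 2 \<and> j = 2 then (1 / \<rho>) \<cdot>\<^sub>m 1\<^sub>m l
             else 0\<^sub>m (d i) (d j)) *\<^sub>v w3 d a b c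
   = w3 d (G1 *\<^sub>v a)
          (\<rho> \<cdot>\<^sub>v (transpose_mat Am *\<^sub>v (Am *\<^sub>v b)) + Pm *\<^sub>v b + (1 - \<gamma>) \<cdot>\<^sub>v (transpose_mat Am *\<^sub>v c))
          (- (Am *\<^sub>v b) + (1 / \<rho>) \<cdot>\<^sub>v c)"
  (is "block_mat d 3 ?B *\<^sub>v _ = _")
proof -
  have B: "?B i j \<in> carrier_mat (d i) (d j)" if "i < 3" "j < 3" for i j
    using less3[OF that(1)] less3[OF that(2)] d G1 Am Pm by (auto simp: uminus_carrier_mat)
  have a': "a \<in> carrier_vec (d 0)" and b': "b \<in> carrier_vec (d 1)" and c': "c \<in> carrier_vec (d 2)"
    using a b c d by auto
  have AtA: "transpose_mat Am * Am \<in> carrier_mat nm nm" using Am by simp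
  have At: "transpose_mat Am \<in> carrier_mat nm l" using Am by simp
  have e0: "?B 0 0 *\<^sub>v a + ?B 0 1 *\<^sub>v b + ?B 0 2 *\<^sub>v c = G1 *\<^sub>v a"
    using G1 a b c d by (simp add: zero_mat_mult_vec)
  have e1: "?B 1 0 *\<^sub>v a + ?B 1 1 *\<^sub>v b + ?B 1 2 *\<^sub>v c
      = \<rho> \<cdot>\<^sub>v (transpose_mat Am *\<^sub>v (Am *\<^sub>v b)) + Pm *\<^sub>v b + (1 - \<gamma>) \<cdot>\<^sub>v (transpose_mat Am *\<^sub>v c)"
  proof -
    have "?B 1 1 *\<^sub>v b = \<rho> \<cdot>\<^sub>v (transpose_mat Am *\<^sub>v (Am *\<^sub>v b)) + Pm *\<^sub>v b"
      using add_mult_distrib_mat_vec[OF smult_carrier_mat[OF AtA] Pm b] smult_mat_vec[OF AtA b]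
        assoc_mult_mat_vec[OF At Am b] by simp
    moreover have "?B 1 2 *\<^sub>v c = (1 - \<gamma>) \<cdot>\<^sub>v (transpose_mat Am *\<^sub>v c)"
      using smult_mat_vec[OF At c] by simp
    moreover have "?B 1 0 *\<^sub>v a = 0\<^sub>v nm" using a d by (simp add: zero_mat_mult_vec)
    ultimately show ?thesis using Am Pm b c by simp
  qed
  have e2: "?B 2 0 *\<^sub>v a + ?B 2 1 *\<^sub>v b + ?B 2 2 *\<^sub>v c = - (Am *\<^sub>v b) + (1 / \<rho>) \<cdot>\<^sub>v c"
  proof -
    have "?B 2 1 *\<^sub>v b = - (Am *\<^sub>v b)" using Am b by simp
    moreover have "?B 2 2 *\<^sub>v c = (1 / \<rho>) \<cdot>\<^sub>v c" using smult_mat_vec[OF one_carrier_mat c] c by simp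
    moreover have "?B 2 0 *\<^sub>v a = 0\<^sub>v l" using a d by (simp add: zero_mat_mult_vec)
    ultimately show ?thesis using Am b c by simp
  qed
  show ?thesis using w3_mult[OF B a' b' c'] e0 e1 e2 by simp
qed

lemma M_mult:
  assumes d: "d 0 = nR" "d 1 = nm" "d 2 = l"
    and Am: "Am \<in> carrier_mat l nm"
    and a: "a \<in> carrier_vec nR" and b: "b \<in> carrier_vec nm" and c: "c \<in> carrier_vec l"
  shows "block_mat d 3 (\<lambda>i j.
             if i = 0 \<and> j = 0 then 1\<^sub>m nR
             else if i = 1 \<and> j = 1 then 1\<^sub>m nm
             else if i = 2 \<and> j = 1 then (- \<rho>) \<cdot>\<^sub>m Am
             else if i = 2 \<and> j = 2 then \<gamma> \<cdot>\<^sub>m 1\<^sub>m l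
             else 0\<^sub>m (d i) (d j)) *\<^sub>v w3 d a b c
   = w3 d a b ((- \<rho>) \<cdot>\<^sub>v (Am *\<^sub>v b) + \<gamma> \<cdot>\<^sub>v c)"
  (is "block_mat d 3 ?B *\<^sub>v _ = _")
proof -
  have B: "?B i j \<in> carrier_mat (d i) (d j)" if "i < 3" "j < 3" for i j
    using less3[OF that(1)] less3[OF that(2)] d Am by auto
  have a': "a \<in> carrier_vec (d 0)" and b': "b \<in> carrier_vec (d 1)" and c': "c \<in> carrier_vec (d 2)"
    using a b c d by auto
  have e0: "?B 0 0 *\<^sub>v a + ?B 0 1 *\<^sub>v b + ?B 0 2 *\<^sub>v c = a"
    using a b c d by (simp add: zero_mat_mult_vec)
  have e1: "?B 1 0 *\<^sub>v a + ?B 1 1 *\<^sub>v b + ?B 1 2 *\<^sub>v c = b"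
    using a b c d by (simp add: zero_mat_mult_vec)
  have e2: "?B 2 0 *\<^sub>v a + ?B 2 1 *\<^sub>v b + ?B 2 2 *\<^sub>v c = (- \<rho>) \<cdot>\<^sub>v (Am *\<^sub>v b) + \<gamma> \<cdot>\<^sub>v c"
  proof -
    have "?B 2 1 *\<^sub>v b = (- \<rho>) \<cdot>\<^sub>v (Am *\<^sub>v b)" using smult_mat_vec[OF Am b] by simp
    moreover have "?B 2 2 *\<^sub>v c = \<gamma> \<cdot>\<^sub>v c" using smult_mat_vec[OF one_carrier_mat c] c by simp
    moreover have "?B 2 0 *\<^sub>v a = 0\<^sub>v l" using a d by (simp add: zero_mat_mult_vec)
    ultimately show ?thesis using Am b c by simp
  qed
  show ?thesis using w3_mult[OF B a' b' c'] e0 e1 e2 by simp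
qed

lemma H_mult:
  assumes d: "d 0 = nR" "d 1 = nm" "d 2 = l" and G1: "G1 \<in> carrier_mat nR nR"
    and Am: "Am \<in> carrier_mat l nm" and Pm: "Pm \<in> carrier_mat nm nm"
    and a: "a \<in> carrier_vec nR" and b: "b \<in> carrier_vec nm" and c: "c \<in> carrier_vec l"
  shows "block_mat d 3 (\<lambda>i j.
             if i = 0 \<and> j = 0 then G1
             else if i = 1 \<and> j = 1 then Pm + (\<rho> / \<gamma>) \<cdot>\<^sub>m (transpose_mat Am * Am)
             else if i = 1 \<and> j = 2 then ((1 - \<gamma>) / \<gamma>) \<cdot>\<^sub>m transpose_mat Am
             else if i = 2 \<and> j = 1 then ((1 - \<gamma>) / \<gamma>) \<cdot>\<^sub>m Am
             else if i = 2 \<and> j = 2 then (1 / (\<gamma> * \<rho>)) \<cdot>\<^sub>m 1\<^sub>m l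
             else 0\<^sub>m (d i) (d j)) *\<^sub>v w3 d a b c
   = w3 d (G1 *\<^sub>v a)
          (Pm *\<^sub>v b + (\<rho> / \<gamma>) \<cdot>\<^sub>v (transpose_mat Am *\<^sub>v (Am *\<^sub>v b)) + ((1 - \<gamma>) / \<gamma>) \<cdot>\<^sub>v (transpose_mat Am *\<^sub>v c))
          (((1 - \<gamma>) / \<gamma>) \<cdot>\<^sub>v (Am *\<^sub>v b) + (1 / (\<gamma> * \<rho>)) \<cdot>\<^sub>v c)"
  (is "block_mat d 3 ?B *\<^sub>v _ = _")
proof -
  have B: "?B i j \<in> carrier_mat (d i) (d j)" if "i < 3" "j < 3" for i j
    using less3[OF that(1)] less3[OF that(2)] d G1 Am Pm by auto
  have a': "a \<in> carrier_vec (d 0)" and b': "b \<in> carrier_vec (d 1)" and c': "c \<in> carrier_vec (d 2)"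
    using a b c d by auto
  have AtA: "transpose_mat Am * Am \<in> carrier_mat nm nm" using Am by simp
  have At: "transpose_mat Am \<in> carrier_mat nm l" using Am by simp
  have e0: "?B 0 0 *\<^sub>v a + ?B 0 1 *\<^sub>v b + ?B 0 2 *\<^sub>v c = G1 *\<^sub>v a"
    using G1 a b c d by (simp add: zero_mat_mult_vec)
  have e1: "?B 1 0 *\<^sub>v a + ?B 1 1 *\<^sub>v b + ?B 1 2 *\<^sub>v c
      = Pm *\<^sub>v b + (\<rho> / \<gamma>) \<cdot>\<^sub>v (transpose_mat Am *\<^sub>v (Am *\<^sub>v b)) + ((1 - \<gamma>) / \<gamma>) \<cdot>\<^sub>v (transpose_mat Am *\<^sub>v c)"
  proof -
    have "?B 1 1 *\<^sub>v b = Pm *\<^sub>v b + (\<rho> / \<gamma>) \<cdot>\<^sub>v (transpose_mat Am *\<^sub>v (Am *\<^sub>v b))"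
      using add_mult_distrib_mat_vec[OF Pm smult_carrier_mat[OF AtA] b] smult_mat_vec[OF AtA b]
        assoc_mult_mat_vec[OF At Am b] by simp
    moreover have "?B 1 2 *\<^sub>v c = ((1 - \<gamma>) / \<gamma>) \<cdot>\<^sub>v (transpose_mat Am *\<^sub>v c)"
      using smult_mat_vec[OF At c] by simp
    moreover have "?B 1 0 *\<^sub>v a = 0\<^sub>v nm" using a d by (simp add: zero_mat_mult_vec)
    ultimately show ?thesis using Am Pm b c by simp
  qed
  have e2: "?B 2 0 *\<^sub>v a + ?B 2 1 *\<^sub>v b + ?B 2 2 *\<^sub>v c = ((1 - \<gamma>) / \<gamma>) \<cdot>\<^sub>v (Am *\<^sub>v b) + (1 / (\<gamma> * \<rho>)) \<cdot>\<^sub>v c"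
  proof -
    have "?B 2 1 *\<^sub>v b = ((1 - \<gamma>) / \<gamma>) \<cdot>\<^sub>v (Am *\<^sub>v b)" using smult_mat_vec[OF Am b] by simp
    moreover have "?B 2 2 *\<^sub>v c = (1 / (\<gamma> * \<rho>)) \<cdot>\<^sub>v c" using smult_mat_vec[OF one_carrier_mat c] c by simp
    moreover have "?B 2 0 *\<^sub>v a = 0\<^sub>v l" using a d by (simp add: zero_mat_mult_vec)
    ultimately show ?thesis using Am b c by simp
  qed
  show ?thesis using w3_mult[OF B a' b' c'] e0 e1 e2 by simp
qed



lemma assoc4:
  fixes a v b w :: "real vec"
  assumes "a \<in> carrier_vec l" "v \<in> carrier_vec l" "b \<in> carrier_vec l" "w \<in> carrier_vec l"
  shows "a + v - b - w = a + (v - b - w)"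
  using assms by (intro eq_vecI) auto

lemma assoc5:
  fixes a v b w u :: "real vec"
  assumes "v \<in> carrier_vec l" "u \<in> carrier_vec l" "a \<in> carrier_vec l" "b \<in> carrier_vec l" "w \<in> carrier_vec l"
  shows "v + u + a - b - w = a + (v + u - b - w)"
  using assms by (intro eq_vecI) auto

lemma mv_minus_idx:
  fixes A :: "real mat"
  assumes "A \<in> carrier_mat nr nc" "u \<in> carrier_vec nc" "w \<in> carrier_vec nc" "r < nr"
  shows "(A *\<^sub>v (u - w)) $ r = (A *\<^sub>v u) $ r - (A *\<^sub>v w) $ r"
  using assms by (simp add: mult_minus_distrib_mat_vec[OF assms(1-3)])

lemma dotT:
  fixes A :: "real mat"
  assumes A: "A \<in> carrier_mat nr nc" and h: "h \<in> carrier_vec nc" and z: "z \<in> carrier_vec nr"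
  shows "h \<bullet> (transpose_mat A *\<^sub>v z) = (A *\<^sub>v h) \<bullet> z"
proof -
  have "h \<bullet> (transpose_mat A *\<^sub>v z) = (transpose_mat A *\<^sub>v z) \<bullet> h"
    by (rule comm_scalar_prod[OF h]) (use A z in simp)
  also have "\<dots> = z \<bullet> (A *\<^sub>v h)" by (rule transpose_vec_mult_scalar[OF A h z])
  also have "\<dots> = (A *\<^sub>v h) \<bullet> z" by (rule comm_scalar_prod[OF z]) (use A h in simp)
  finally show ?thesis .
qed

lemma HM_blocks:
  fixes \<rho> \<gamma> :: real
  assumes g: "\<gamma> \<noteq> 0" and r: "\<rho> \<noteq> 0"
    and Am: "Am \<in> carrier_mat l nm" and Pm: "Pm \<in> carrier_mat nm nm"
    and b: "b \<in> carrier_vec nm" and c: "c \<in> carrier_vec l"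
  shows "Pm *\<^sub>v b + (\<rho> / \<gamma>) \<cdot>\<^sub>v (transpose_mat Am *\<^sub>v (Am *\<^sub>v b))
           + ((1 - \<gamma>) / \<gamma>) \<cdot>\<^sub>v (transpose_mat Am *\<^sub>v ((- \<rho>) \<cdot>\<^sub>v (Am *\<^sub>v b) + \<gamma> \<cdot>\<^sub>v c))
         = \<rho> \<cdot>\<^sub>v (transpose_mat Am *\<^sub>v (Am *\<^sub>v b)) + Pm *\<^sub>v b + (1 - \<gamma>) \<cdot>\<^sub>v (transpose_mat Am *\<^sub>v c)"
    and "((1 - \<gamma>) / \<gamma>) \<cdot>\<^sub>v (Am *\<^sub>v b) + (1 / (\<gamma> * \<rho>)) \<cdot>\<^sub>v ((- \<rho>) \<cdot>\<^sub>v (Am *\<^sub>v b) + \<gamma> \<cdot>\<^sub>v c)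
         = - (Am *\<^sub>v b) + (1 / \<rho>) \<cdot>\<^sub>v c"
proof -
  have At: "transpose_mat Am \<in> carrier_mat nm l" using Am by simp
  have Ab: "Am *\<^sub>v b \<in> carrier_vec l" using Am b by simp
  have "transpose_mat Am *\<^sub>v ((- \<rho>) \<cdot>\<^sub>v (Am *\<^sub>v b) + \<gamma> \<cdot>\<^sub>v c)
      = (- \<rho>) \<cdot>\<^sub>v (transpose_mat Am *\<^sub>v (Am *\<^sub>v b)) + \<gamma> \<cdot>\<^sub>v (transpose_mat Am *\<^sub>v c)"
    using mult_add_distrib_mat_vec[OF At smult_carrier_vec[THEN iffD2, OF Ab] smult_carrier_vec[THEN iffD2, OF c]]
      mult_mat_vec[OF At Ab] mult_mat_vec[OF At c] by simp
  then show "Pm *\<^sub>v b + (\<rho> / \<gamma>) \<cdot>\<^sub>v (transpose_mat Am *\<^sub>v (Am *\<^sub>v b))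
           + ((1 - \<gamma>) / \<gamma>) \<cdot>\<^sub>v (transpose_mat Am *\<^sub>v ((- \<rho>) \<cdot>\<^sub>v (Am *\<^sub>v b) + \<gamma> \<cdot>\<^sub>v c))
         = \<rho> \<cdot>\<^sub>v (transpose_mat Am *\<^sub>v (Am *\<^sub>v b)) + Pm *\<^sub>v b + (1 - \<gamma>) \<cdot>\<^sub>v (transpose_mat Am *\<^sub>v c)"
    using Am Pm b c g by (intro eq_vecI) (auto simp: field_simps)
  show "((1 - \<gamma>) / \<gamma>) \<cdot>\<^sub>v (Am *\<^sub>v b) + (1 / (\<gamma> * \<rho>)) \<cdot>\<^sub>v ((- \<rho>) \<cdot>\<^sub>v (Am *\<^sub>v b) + \<gamma> \<cdot>\<^sub>v c)
         = - (Am *\<^sub>v b) + (1 / \<rho>) \<cdot>\<^sub>v c"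
    using Am b c g r by (intro eq_vecI) (auto simp: field_simps)
qed



theorem lemma4p3:
  fixes m l :: nat and n :: "nat \<Rightarrow> nat"
    and \<theta> :: "nat \<Rightarrow> real vec \<Rightarrow> real" and X :: "nat \<Rightarrow> real vec set"
    and A :: "nat \<Rightarrow> real mat" and b :: "real vec"
    and \<rho> \<gamma> :: real and P :: "nat \<Rightarrow> real mat"
    and x :: "nat \<Rightarrow> nat \<Rightarrow> real vec" and y :: "nat \<Rightarrow> real vec"
    and k :: nat
  assumes m2: "m \<ge> 2" and l_pos: "l > 0" and n_pos: "\<forall>i\<in>{1..m}. n i > 0"
    and theta_conv: "\<forall>i\<in>{1..m}. convex_fun_vec (n i) (\<theta> i)"
    and X_ne: "\<forall>i\<in>{1..m}. X i \<noteq> {}"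
    and X_closed: "\<forall>i\<in>{1..m}. closed_set_vec (n i) (X i)"
    and X_conv: "\<forall>i\<in>{1..m}. convex_set_vec (n i) (X i)"
    and A_dim: "\<forall>i\<in>{1..m}. A i \<in> carrier_mat l (n i)"
    and A_rank: "\<forall>i\<in>{1..m}. vec_space.rank l (A i) = n i"
    and b_dim: "b \<in> carrier_vec l"
    and sol_ne: "\<exists>us. (\<forall>i\<in>{1..m}. us i \<in> X i) \<and> vsum l (\<lambda>i. A i *\<^sub>v us i) {1..m} = b \<and>
        (\<forall>u. (\<forall>i\<in>{1..m}. u i \<in> X i) \<and> vsum l (\<lambda>i. A i *\<^sub>v u i) {1..m} = b \<longrightarrow>
              (\<Sum>i=1..m. \<theta> i (us i)) \<le> (\<Sum>i=1..m. \<theta> i (u i)))"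
    and Wstar_ne: "\<exists>xs ys. (\<forall>i\<in>{1..m}. xs i \<in> X i) \<and> ys \<in> carrier_vec l \<and>
        (\<forall>u v. (\<forall>i\<in>{1..m}. u i \<in> X i) \<and> v \<in> carrier_vec l \<longrightarrow>
           (\<Sum>i=1..m. \<theta> i (u i)) - (\<Sum>i=1..m. \<theta> i (xs i))
           + (\<Sum>i=1..m. (u i - xs i) \<bullet> (- (transpose_mat (A i) *\<^sub>v ys)))
           + (v - ys) \<bullet> (vsum l (\<lambda>i. A i *\<^sub>v xs i) {1..m} - b) \<ge> 0)"
    and rho_pos: "\<rho> > 0" and gamma_pos: "0 < \<gamma>" and gamma_lt: "\<gamma> < 2"
    and P_pd: "\<forall>i\<in>{1..m}. sym_pos_def (n i) (P i)"
  defines "nR \<equiv> offs (\<lambda>i. n (Suc i)) (m - 1)"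
  defines "G1 \<equiv> block_mat (\<lambda>i. n (Suc i)) (m - 1)
             (\<lambda>i j. if i = j then P (Suc i)
                    else (- \<rho>) \<cdot>\<^sub>m (transpose_mat (A (Suc i)) * A (Suc j)))"
  assumes G1_pd: "sym_pos_def nR G1"
  defines "d3 \<equiv> (\<lambda>i::nat. if i = 0 then nR else if i = 1 then n m else l)"
  defines "Q \<equiv> block_mat d3 3 (\<lambda>i j.
             if i = 0 \<and> j = 0 then G1
             else if i = 1 \<and> j = 1 then \<rho> \<cdot>\<^sub>m (transpose_mat (A m) * A m) + P m
             else if i = 1 \<and> j = 2 then (1 - \<gamma>) \<cdot>\<^sub>m transpose_mat (A m)
             else if i = 2 \<and> j = 1 then - A m
             else if i = 2 \<and> j = 2 then (1 / \<rho>) \<cdot>\<^sub>m 1\<^sub>m l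
             else 0\<^sub>m (d3 i) (d3 j))"
  defines "M \<equiv> block_mat d3 3 (\<lambda>i j.
             if i = 0 \<and> j = 0 then 1\<^sub>m nR
             else if i = 1 \<and> j = 1 then 1\<^sub>m (n m)
             else if i = 2 \<and> j = 1 then (- \<rho>) \<cdot>\<^sub>m A m
             else if i = 2 \<and> j = 2 then \<gamma> \<cdot>\<^sub>m 1\<^sub>m l
             else 0\<^sub>m (d3 i) (d3 j))"
  defines "H \<equiv> block_mat d3 3 (\<lambda>i j.
             if i = 0 \<and> j = 0 then G1
             else if i = 1 \<and> j = 1 then P m + (\<rho> / \<gamma>) \<cdot>\<^sub>m (transpose_mat (A m) * A m)
             else if i = 1 \<and> j = 2 then ((1 - \<gamma>) / \<gamma>) \<cdot>\<^sub>m transpose_mat (A m)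
             else if i = 2 \<and> j = 1 then ((1 - \<gamma>) / \<gamma>) \<cdot>\<^sub>m A m
             else if i = 2 \<and> j = 2 then (1 / (\<gamma> * \<rho>)) \<cdot>\<^sub>m 1\<^sub>m l
             else 0\<^sub>m (d3 i) (d3 j))"
  defines "N \<equiv> transpose_mat Q + Q - transpose_mat M * H * M"
  assumes x0: "\<forall>i\<in>{1..m}. x 0 i \<in> X i" and y0: "y 0 \<in> carrier_vec l"
    and x_step: "\<forall>k. \<forall>j\<in>{1..m-1}. x (Suc k) j \<in> X j \<and>
        (\<forall>z\<in>X j.
           \<theta> j (x (Suc k) j)
             + \<rho> / 2 * sqnorm (A j *\<^sub>v x (Suc k) j + vsum l (\<lambda>i. A i *\<^sub>v x k i) ({1..m} - {j}) - b - (1 / \<rho>) \<cdot>\<^sub>v y k)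
             + 1 / 2 * qnorm (P j) (x (Suc k) j - x k j)
           \<le> \<theta> j z
             + \<rho> / 2 * sqnorm (A j *\<^sub>v z + vsum l (\<lambda>i. A i *\<^sub>v x k i) ({1..m} - {j}) - b - (1 / \<rho>) \<cdot>\<^sub>v y k)
             + 1 / 2 * qnorm (P j) (z - x k j))"
    and xm_step: "\<forall>k. x (Suc k) m \<in> X m \<and>
        (\<forall>z\<in>X m.
           \<theta> m (x (Suc k) m)
             + \<rho> / 2 * sqnorm (\<gamma> \<cdot>\<^sub>v vsum l (\<lambda>i. A i *\<^sub>v x (Suc k) i) {1..m-1} + (1 - \<gamma>) \<cdot>\<^sub>v (b - A m *\<^sub>v x k m)
                                + A m *\<^sub>v x (Suc k) m - b - (1 / \<rho>) \<cdot>\<^sub>v y k)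
             + 1 / 2 * qnorm (P m) (x (Suc k) m - x k m)
           \<le> \<theta> m z
             + \<rho> / 2 * sqnorm (\<gamma> \<cdot>\<^sub>v vsum l (\<lambda>i. A i *\<^sub>v x (Suc k) i) {1..m-1} + (1 - \<gamma>) \<cdot>\<^sub>v (b - A m *\<^sub>v x k m)
                                + A m *\<^sub>v z - b - (1 / \<rho>) \<cdot>\<^sub>v y k)
             + 1 / 2 * qnorm (P m) (z - x k m))"
    and y_step: "\<forall>k. y (Suc k) = y k - \<rho> \<cdot>\<^sub>v (\<gamma> \<cdot>\<^sub>v vsum l (\<lambda>i. A i *\<^sub>v x (Suc k) i) {1..m-1}
                      + (1 - \<gamma>) \<cdot>\<^sub>v (b - A m *\<^sub>v x k m) + A m *\<^sub>v x (Suc k) m - b)"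
  defines "xbar \<equiv> (\<lambda>k i. x (Suc k) i)"
  defines "ybar \<equiv> (\<lambda>k. y k - \<rho> \<cdot>\<^sub>v (vsum l (\<lambda>i. A i *\<^sub>v x (Suc k) i) {1..m-1} + A m *\<^sub>v x k m - b))"
  defines "wv \<equiv> (\<lambda>k. stack_vec d3 3 (\<lambda>t. if t = 0 then stack_vec (\<lambda>i. n (Suc i)) (m - 1) (\<lambda>i. x k (Suc i))
                                          else if t = 1 then x k m else y k))"
  defines "wbar \<equiv> (\<lambda>k. stack_vec d3 3 (\<lambda>t. if t = 0 then stack_vec (\<lambda>i. n (Suc i)) (m - 1) (\<lambda>i. xbar k (Suc i))
                                          else if t = 1 then xbar k m else ybar k))"
  defines "dlt \<equiv> (\<lambda>k. wv k - wbar k)"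
  shows "(dlt k) \<bullet> ((transpose_mat M * H * M) *\<^sub>v (dlt k - dlt (Suc k)))
           \<ge> 1 / 2 * qnorm (transpose_mat Q + Q) (dlt k - dlt (Suc k))"
proof -
  have mS: "Suc (m - 1) = m" using m2 by auto
  have mI: "m \<in> {1..m}" using m2 by auto
  have Ac: "A i \<in> carrier_mat l (n i)" if "i \<in> {1..m}" for i using A_dim that by blast
  have Pc: "P i \<in> carrier_mat (n i) (n i)" if "i \<in> {1..m}" for i
    using P_pd that unfolding sym_pos_def_def by blast
  have Ps: "transpose_mat (P i) = P i" if "i \<in> {1..m}" for i
    using P_pd that unfolding sym_pos_def_def by blast
  have Xc: "X i \<subseteq> carrier_vec (n i)" if "i \<in> {1..m}" for i
    using X_conv that unfolding convex_set_vec_def by blast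
  have xX: "x t i \<in> X i" if "i \<in> {1..m}" for t i
  proof (cases t)
    case 0 then show ?thesis using x0 that by simp
  next
    case (Suc t')
    show ?thesis
    proof (cases "i = m")
      case True then show ?thesis using xm_step Suc by simp
    next
      case False then have "i \<in> {1..m-1}" using that by auto
      then show ?thesis using x_step Suc by blast
    qed
  qed
  have xc: "x t i \<in> carrier_vec (n i)" if "i \<in> {1..m}" for t i using xX[OF that] Xc[OF that] by blast
  have Axc: "A i *\<^sub>v x t i \<in> carrier_vec l" if "i \<in> {1..m}" for t i
    using Ac[OF that] xc[OF that] by simp
  have yc: "y t \<in> carrier_vec l" for t
  proof (induction t)
    case 0 then show ?case using y0 .
  next
    case (Suc t) then show ?case using y_step b_dim Axc[OF mI] by (simp add: vsum_carrier)
  qed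
  have ybc: "ybar t \<in> carrier_vec l" for t
    using yc b_dim Axc[OF mI] unfolding ybar_def by (simp add: vsum_carrier)
  define p where "p = m - 1"
  define dR where "dR = (\<lambda>i. n (Suc i))"
  have nR: "nR = offs dR p" unfolding nR_def dR_def p_def ..
  have d3: "d3 0 = nR" "d3 1 = n m" "d3 2 = l" unfolding d3_def by auto
  have G1c: "G1 \<in> carrier_mat nR nR" using G1_pd unfolding sym_pos_def_def by blast
  have AmC: "A m \<in> carrier_mat l (n m)" using Ac[OF mI] .
  have PmC: "P m \<in> carrier_mat (n m) (n m)" using Pc[OF mI] .
  have SucI: "Suc i \<in> {1..m}" if "i < p" for i using that unfolding p_def by auto
  have stc: "stack_vec dR p g \<in> carrier_vec nR" for g unfolding nR by (rule stack_carrier)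
  define e where "e = (\<lambda>t i. x t i - x (Suc t) i)"
  define f where "f = (\<lambda>t. y t - ybar t)"
  have ec: "e t i \<in> carrier_vec (n i)" if "i \<in> {1..m}" for t i
    using xc[OF that] unfolding e_def by simp
  have fc: "f t \<in> carrier_vec l" for t using yc ybc unfolding f_def by simp
  have wv_eq: "wv t = w3 d3 (stack_vec dR p (\<lambda>i. x t (Suc i))) (x t m) (y t)" for t
    unfolding wv_def w3_def dR_def p_def by simp
  have wbar_eq: "wbar t = w3 d3 (stack_vec dR p (\<lambda>i. x (Suc t) (Suc i))) (x (Suc t) m) (ybar t)" for t
    unfolding wbar_def w3_def dR_def p_def xbar_def by simp
  have stm: "stack_vec dR p (\<lambda>i. x t (Suc i)) - stack_vec dR p (\<lambda>i. x t' (Suc i))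
      = stack_vec dR p (\<lambda>i. x t (Suc i) - x t' (Suc i))" for t t'
    by (rule stack_minus) (use xc SucI in \<open>auto simp: dR_def\<close>)
  have dlt_eq: "dlt t = w3 d3 (stack_vec dR p (\<lambda>i. e t (Suc i))) (e t m) (f t)" for t
  proof -
    have "dlt t = w3 d3 (stack_vec dR p (\<lambda>i. x t (Suc i)) - stack_vec dR p (\<lambda>i. x (Suc t) (Suc i)))
        (x t m - x (Suc t) m) (y t - ybar t)"
      unfolding dlt_def wv_eq wbar_eq by (rule w3_minus) (use d3 stc xc[OF mI] yc ybc in auto)
    then show ?thesis unfolding stm e_def f_def by simp
  qed
  have wvd: "wv t - wv (Suc t) = w3 d3 (stack_vec dR p (\<lambda>i. e t (Suc i))) (e t m) (y t - y (Suc t))" for t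
  proof -
    have "wv t - wv (Suc t) = w3 d3 (stack_vec dR p (\<lambda>i. x t (Suc i)) - stack_vec dR p (\<lambda>i. x (Suc t) (Suc i)))
        (x t m - x (Suc t) m) (y t - y (Suc t))"
      unfolding wv_eq by (rule w3_minus) (use d3 stc xc[OF mI] yc in auto)
    then show ?thesis unfolding stm e_def by simp
  qed
  define E where "E = (\<lambda>i. e k i - e (Suc k) i)"
  define hh where "hh = (\<lambda>i. x (Suc k) i - x (Suc (Suc k)) i)"
  define \<eta> where "\<eta> = ybar k - ybar (Suc k)"
  define Dc where "Dc = f k - f (Suc k)"
  define \<Delta>R where "\<Delta>R = stack_vec dR p (\<lambda>i. E (Suc i))"
  have Ec: "E i \<in> carrier_vec (n i)" if "i \<in> {1..m}" for i using ec[OF that] unfolding E_def by simp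
  have hhc: "hh i \<in> carrier_vec (n i)" if "i \<in> {1..m}" for i using xc[OF that] unfolding hh_def by simp
  have \<eta>c: "\<eta> \<in> carrier_vec l" using ybc unfolding \<eta>_def by simp
  have Dcc: "Dc \<in> carrier_vec l" using fc unfolding Dc_def by simp
  define W where "W = (\<lambda>t. vsum l (\<lambda>i. A i *\<^sub>v x t i) {1..m-1})"
  have Wc: "W t \<in> carrier_vec l" for t unfolding W_def by (rule vsum_carrier)
  have dimW: "dim_vec (W t) = l" for t using Wc[of t] by (rule carrier_vecD)
  have dimy: "dim_vec (y t) = l" for t using yc[of t] by (rule carrier_vecD)
  have dimyb: "dim_vec (ybar t) = l" for t using ybc[of t] by (rule carrier_vecD)
  have dimb: "dim_vec b = l" using b_dim by (rule carrier_vecD)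
  have dimAx: "dim_vec (A i *\<^sub>v x t i) = l" if "i \<in> {1..m}" for t i using Axc[OF that] by (rule carrier_vecD)
  have ybS: "ybar t = y t - \<rho> \<cdot>\<^sub>v (W (Suc t) + A m *\<^sub>v x t m - b)" for t
    unfolding ybar_def W_def by simp
  have ybar_r: "ybar t $ r = y t $ r - \<rho> * (W (Suc t) $ r + (A m *\<^sub>v x t m) $ r - b $ r)" if "r < l" for t r
    using ybS[of t] that dimW dimy dimb dimAx[OF mI] by simp
  have yS: "y (Suc t) = y t - \<rho> \<cdot>\<^sub>v (\<gamma> \<cdot>\<^sub>v W (Suc t) + (1 - \<gamma>) \<cdot>\<^sub>v (b - A m *\<^sub>v x t m) + A m *\<^sub>v x (Suc t) m - b)" for t
    unfolding W_def using y_step by simp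
  have y_r: "y (Suc t) $ r = y t $ r - \<rho> * (\<gamma> * W (Suc t) $ r + (1 - \<gamma>) * (b $ r - (A m *\<^sub>v x t m) $ r)
      + (A m *\<^sub>v x (Suc t) m) $ r - b $ r)" if "r < l" for t r
    using yS[of t] that dimW dimy dimb dimAx[OF mI] by simp
  have f_r: "f t $ r = \<rho> * (W (Suc t) $ r + (A m *\<^sub>v x t m) $ r - b $ r)" if "r < l" for t r
    unfolding f_def using that dimy dimyb ybar_r[OF that] by simp
  have Ax_minus: "(A i *\<^sub>v (x t i - x t' i)) $ r = (A i *\<^sub>v x t i) $ r - (A i *\<^sub>v x t' i) $ r"
    if "i \<in> {1..m}" "r < l" for i t t' r
    by (rule mv_minus_idx[OF Ac[OF that(1)] xc[OF that(1)] xc[OF that(1)] that(2)])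
  have AE_r: "(A i *\<^sub>v E i) $ r = (A i *\<^sub>v x k i) $ r - 2 * (A i *\<^sub>v x (Suc k) i) $ r + (A i *\<^sub>v x (Suc (Suc k)) i) $ r"
    if "i \<in> {1..m}" "r < l" for i r
  proof -
    have "(A i *\<^sub>v E i) $ r = (A i *\<^sub>v e k i) $ r - (A i *\<^sub>v e (Suc k) i) $ r"
      unfolding E_def by (rule mv_minus_idx[OF Ac[OF that(1)] ec[OF that(1)] ec[OF that(1)] that(2)])
    then show ?thesis unfolding e_def using Ax_minus[OF that] by simp
  qed
  have Ahh_r: "(A i *\<^sub>v hh i) $ r = (A i *\<^sub>v x (Suc k) i) $ r - (A i *\<^sub>v x (Suc (Suc k)) i) $ r"
    if "i \<in> {1..m}" "r < l" for i r
    unfolding hh_def by (rule Ax_minus[OF that])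
  have \<Delta>Rc: "\<Delta>R \<in> carrier_vec nR" unfolding \<Delta>R_def by (rule stc)
  have Del: "dlt k - dlt (Suc k) = w3 d3 \<Delta>R (E m) Dc"
  proof -
    have "dlt k - dlt (Suc k) = w3 d3 (stack_vec dR p (\<lambda>i. e k (Suc i)) - stack_vec dR p (\<lambda>i. e (Suc k) (Suc i)))
        (e k m - e (Suc k) m) (f k - f (Suc k))"
      unfolding dlt_eq by (rule w3_minus) (use d3 stc ec[OF mI] fc in auto)
    also have "stack_vec dR p (\<lambda>i. e k (Suc i)) - stack_vec dR p (\<lambda>i. e (Suc k) (Suc i))
        = stack_vec dR p (\<lambda>i. E (Suc i))"
      unfolding E_def by (rule stack_minus) (use ec SucI in \<open>auto simp: dR_def\<close>)
    finally show ?thesis unfolding \<Delta>R_def E_def Dc_def by simp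
  qed
  have wbd: "wbar k - wbar (Suc k) = w3 d3 (stack_vec dR p (\<lambda>i. hh (Suc i))) (hh m) \<eta>"
  proof -
    have "wbar k - wbar (Suc k) = w3 d3 (stack_vec dR p (\<lambda>i. x (Suc k) (Suc i)) - stack_vec dR p (\<lambda>i. x (Suc (Suc k)) (Suc i)))
        (x (Suc k) m - x (Suc (Suc k)) m) (ybar k - ybar (Suc k))"
      unfolding wbar_eq by (rule w3_minus) (use d3 stc xc[OF mI] ybc in auto)
    then show ?thesis unfolding stm hh_def \<eta>_def by simp
  qed
  define N3 where "N3 = offs d3 3"
  have Qc: "Q \<in> carrier_mat N3 N3" unfolding Q_def N3_def by (rule block_mat_carrier)
  have Mc: "M \<in> carrier_mat N3 N3" unfolding M_def N3_def by (rule block_mat_carrier)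
  have Hc: "H \<in> carrier_mat N3 N3" unfolding H_def N3_def by (rule block_mat_carrier)
  have w3c: "w3 d3 a b c \<in> carrier_vec N3" for a b c unfolding N3_def by (rule w3_carrier)
  define \<Delta> where "\<Delta> = dlt k - dlt (Suc k)"
  have \<Delta>c: "\<Delta> \<in> carrier_vec N3" unfolding \<Delta>_def Del by (rule w3c)
  have dltc: "dlt t \<in> carrier_vec N3" for t unfolding dlt_eq by (rule w3c)
  define q1 where "q1 = \<rho> \<cdot>\<^sub>v (transpose_mat (A m) *\<^sub>v (A m *\<^sub>v E m)) + P m *\<^sub>v E m + (1 - \<gamma>) \<cdot>\<^sub>v (transpose_mat (A m) *\<^sub>v Dc)"
  define q2 where "q2 = - (A m *\<^sub>v E m) + (1 / \<rho>) \<cdot>\<^sub>v Dc"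
  have QD: "Q *\<^sub>v \<Delta> = w3 d3 (G1 *\<^sub>v \<Delta>R) q1 q2"
    unfolding \<Delta>_def Del Q_def q1_def q2_def by (rule Q_mult[OF d3 G1c AmC PmC \<Delta>Rc Ec[OF mI] Dcc])
  have QDc: "Q *\<^sub>v \<Delta> \<in> carrier_vec N3" using Qc \<Delta>c by simp
  have Mw: "M *\<^sub>v w3 d3 a b c = w3 d3 a b ((- \<rho>) \<cdot>\<^sub>v (A m *\<^sub>v b) + \<gamma> \<cdot>\<^sub>v c)"
    if "a \<in> carrier_vec nR" "b \<in> carrier_vec (n m)" "c \<in> carrier_vec l" for a b c
    unfolding M_def by (rule M_mult[OF d3 AmC that])
  have HMQ: "H *\<^sub>v (M *\<^sub>v \<Delta>) = Q *\<^sub>v \<Delta>"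
  proof -
    have c': "(- \<rho>) \<cdot>\<^sub>v (A m *\<^sub>v E m) + \<gamma> \<cdot>\<^sub>v Dc \<in> carrier_vec l" using AmC Ec[OF mI] Dcc by simp
    have "H *\<^sub>v (M *\<^sub>v \<Delta>) = H *\<^sub>v w3 d3 \<Delta>R (E m) ((- \<rho>) \<cdot>\<^sub>v (A m *\<^sub>v E m) + \<gamma> \<cdot>\<^sub>v Dc)"
      unfolding \<Delta>_def Del by (simp add: Mw[OF \<Delta>Rc Ec[OF mI] Dcc])
    also have "\<dots> = w3 d3 (G1 *\<^sub>v \<Delta>R)
          (P m *\<^sub>v E m + (\<rho> / \<gamma>) \<cdot>\<^sub>v (transpose_mat (A m) *\<^sub>v (A m *\<^sub>v E m))
             + ((1 - \<gamma>) / \<gamma>) \<cdot>\<^sub>v (transpose_mat (A m) *\<^sub>v ((- \<rho>) \<cdot>\<^sub>v (A m *\<^sub>v E m) + \<gamma> \<cdot>\<^sub>v Dc)))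
          (((1 - \<gamma>) / \<gamma>) \<cdot>\<^sub>v (A m *\<^sub>v E m) + (1 / (\<gamma> * \<rho>)) \<cdot>\<^sub>v ((- \<rho>) \<cdot>\<^sub>v (A m *\<^sub>v E m) + \<gamma> \<cdot>\<^sub>v Dc))"
      unfolding H_def by (rule H_mult[OF d3 G1c AmC PmC \<Delta>Rc Ec[OF mI] c'])
    also have "\<dots> = w3 d3 (G1 *\<^sub>v \<Delta>R) q1 q2"
      unfolding q1_def q2_def
      using HM_blocks[of \<gamma> \<rho> "A m" l "n m" "P m" "E m" Dc] gamma_pos rho_pos AmC PmC Ec[OF mI] Dcc by simp
    finally show ?thesis using QD by simp
  qed
  have Mdlt: "M *\<^sub>v dlt k = wv k - wv (Suc k)"
  proof -
    have "M *\<^sub>v dlt k = w3 d3 (stack_vec dR p (\<lambda>i. e k (Suc i))) (e k m) ((- \<rho>) \<cdot>\<^sub>v (A m *\<^sub>v e k m) + \<gamma> \<cdot>\<^sub>v f k)"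
      unfolding dlt_eq by (rule Mw[OF stc ec[OF mI] fc])
    also have "(- \<rho>) \<cdot>\<^sub>v (A m *\<^sub>v e k m) + \<gamma> \<cdot>\<^sub>v f k = y k - y (Suc k)"
    proof (rule eq_vecI)
      fix r assume "r < dim_vec (y k - y (Suc k))"
      then have r: "r < l" using dimy by simp
      have a1: "(A m *\<^sub>v e k m) $ r = (A m *\<^sub>v x k m) $ r - (A m *\<^sub>v x (Suc k) m) $ r"
        unfolding e_def by (rule Ax_minus[OF mI r])
      have "((- \<rho>) \<cdot>\<^sub>v (A m *\<^sub>v e k m) + \<gamma> \<cdot>\<^sub>v f k) $ r = - \<rho> * (A m *\<^sub>v e k m) $ r + \<gamma> * f k $ r"
        using r AmC by (simp del: index_mult_mat_vec add: carrier_vecD[OF fc])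
      also have "\<dots> = (y k - y (Suc k)) $ r"
        unfolding a1 f_r[OF r] using r dimy by (simp del: index_mult_mat_vec add: y_r[OF r] algebra_simps)
      finally show "((- \<rho>) \<cdot>\<^sub>v (A m *\<^sub>v e k m) + \<gamma> \<cdot>\<^sub>v f k) $ r = (y k - y (Suc k)) $ r" .
    qed (use AmC ec[OF mI] fc dimy in simp)
    finally show ?thesis unfolding wvd .
  qed
  have V4: "(wbar k - wbar (Suc k)) \<bullet> (Q *\<^sub>v \<Delta>) \<ge> 0"
  proof -
    define V where "V = (\<lambda>j. vsum l (\<lambda>i. A i *\<^sub>v E i) ({1..m-1} - {j}))"
    define u where "u = (\<lambda>i. P (Suc i) *\<^sub>v E (Suc i) - \<rho> \<cdot>\<^sub>v (transpose_mat (A (Suc i)) *\<^sub>v V (Suc i)))"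
    have Vc: "V j \<in> carrier_vec l" for j unfolding V_def by (rule vsum_carrier)
    have Ahhc: "A i *\<^sub>v hh i \<in> carrier_vec l" if "i \<in> {1..m}" for i using Ac[OF that] hhc[OF that] by simp
    have AEc: "A i *\<^sub>v E i \<in> carrier_vec l" if "i \<in> {1..m}" for i using Ac[OF that] Ec[OF that] by simp
    have uc: "u i \<in> carrier_vec (n (Suc i))" if "i < p" for i
      unfolding u_def using Pc[OF SucI[OF that]] Ac[OF SucI[OF that]] Ec[OF SucI[OF that]] Vc by simp
    have G1D: "G1 *\<^sub>v \<Delta>R = stack_vec dR p u"
      unfolding G1_def \<Delta>R_def dR_def p_def
    proof (rule block_mult)
      fix i j assume i: "i < m - 1" and j: "j < m - 1"
      show "(if i = j then P (Suc i) else (- \<rho>) \<cdot>\<^sub>m (transpose_mat (A (Suc i)) * A (Suc j)))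
          \<in> carrier_mat (n (Suc i)) (n (Suc j))"
      proof -
        have Si: "Suc i \<in> {1..m}" and Sj: "Suc j \<in> {1..m}" using i j by auto
        have "transpose_mat (A (Suc i)) * A (Suc j) \<in> carrier_mat (n (Suc i)) (n (Suc j))"
          using Ac[OF Si] Ac[OF Sj] by simp
        then show ?thesis using Pc[OF Si] by (cases "i = j") simp_all
      qed
    next
      fix j assume j: "j < m - 1"
      show "E (Suc j) \<in> carrier_vec (n (Suc j))" using Ec[of "Suc j"] j by auto
    next
      fix i assume i: "i < m - 1"
      show "u i \<in> carrier_vec (n (Suc i))" using uc[of i] i unfolding p_def by simp
    next
      fix i s assume i: "i < m - 1" and s: "s < n (Suc i)"
      have Si: "Suc i \<in> {1..m}" using i by auto
      have At: "transpose_mat (A (Suc i)) \<in> carrier_mat (n (Suc i)) l" using Ac[OF Si] by simp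
      have trm: "(((- \<rho>) \<cdot>\<^sub>m (transpose_mat (A (Suc i)) * A (Suc j))) *\<^sub>v E (Suc j)) $ s
          = - \<rho> * (transpose_mat (A (Suc i)) *\<^sub>v (A (Suc j) *\<^sub>v E (Suc j))) $ s" if j: "j < m - 1" for j
      proof -
        have Sj: "Suc j \<in> {1..m}" using j by auto
        have "((- \<rho>) \<cdot>\<^sub>m (transpose_mat (A (Suc i)) * A (Suc j))) *\<^sub>v E (Suc j)
            = (- \<rho>) \<cdot>\<^sub>v (transpose_mat (A (Suc i)) *\<^sub>v (A (Suc j) *\<^sub>v E (Suc j)))"
          using smult_mat_vec[OF mult_carrier_mat[OF At Ac[OF Sj]] Ec[OF Sj]]
            assoc_mult_mat_vec[OF At Ac[OF Sj] Ec[OF Sj]] by simp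
        then show ?thesis using s At Ac[OF Sj] by (simp del: index_mult_mat_vec)
      qed
      have "(\<Sum>j<m - 1. ((if i = j then P (Suc i) else (- \<rho>) \<cdot>\<^sub>m (transpose_mat (A (Suc i)) * A (Suc j))) *\<^sub>v E (Suc j)) $ s)
          = (P (Suc i) *\<^sub>v E (Suc i)) $ s + (\<Sum>j\<in>{..<m - 1} - {i}. ((if i = j then P (Suc i) else (- \<rho>) \<cdot>\<^sub>m (transpose_mat (A (Suc i)) * A (Suc j))) *\<^sub>v E (Suc j)) $ s)"
        by (subst sum.remove[of _ i]) (use i in auto)
      also have "(\<Sum>j\<in>{..<m - 1} - {i}. ((if i = j then P (Suc i) else (- \<rho>) \<cdot>\<^sub>m (transpose_mat (A (Suc i)) * A (Suc j))) *\<^sub>v E (Suc j)) $ s)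
          = (\<Sum>j\<in>{..<m - 1} - {i}. - \<rho> * (transpose_mat (A (Suc i)) *\<^sub>v (A (Suc j) *\<^sub>v E (Suc j))) $ s)"
        by (rule sum.cong) (auto simp: trm)
      also have "\<dots> = - \<rho> * (\<Sum>j\<in>{..<m - 1} - {i}. (transpose_mat (A (Suc i)) *\<^sub>v (A (Suc j) *\<^sub>v E (Suc j))) $ s)"
        by (simp add: sum_distrib_left)
      also have "(\<Sum>j\<in>{..<m - 1} - {i}. (transpose_mat (A (Suc i)) *\<^sub>v (A (Suc j) *\<^sub>v E (Suc j))) $ s)
          = (transpose_mat (A (Suc i)) *\<^sub>v V (Suc i)) $ s"
      proof -
        have img: "{1..m-1} - {Suc i} = Suc ` ({..<m - 1} - {i})"
        proof
          show "{1..m-1} - {Suc i} \<subseteq> Suc ` ({..<m - 1} - {i})"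
          proof
            fix z assume z: "z \<in> {1..m-1} - {Suc i}"
            then have "z = Suc (z - 1)" "z - 1 \<in> {..<m - 1} - {i}" by auto
            then show "z \<in> Suc ` ({..<m - 1} - {i})" by (metis imageI)
          qed
        qed auto
        have "(transpose_mat (A (Suc i)) *\<^sub>v V (Suc i)) $ s
            = (\<Sum>i'\<in>{1..m-1} - {Suc i}. (transpose_mat (A (Suc i)) *\<^sub>v (A i' *\<^sub>v E i')) $ s)"
          unfolding V_def
          by (rule mat_vec_vsum[OF At _ s]) (rule AEc, auto)
        also have "\<dots> = (\<Sum>j\<in>{..<m - 1} - {i}. (transpose_mat (A (Suc i)) *\<^sub>v (A (Suc j) *\<^sub>v E (Suc j))) $ s)"
          unfolding img by (subst sum.reindex) auto
        finally show ?thesis by simp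
      qed
      finally show "u i $ s = (\<Sum>j<m - 1. ((if i = j then P (Suc i) else (- \<rho>) \<cdot>\<^sub>m (transpose_mat (A (Suc i)) * A (Suc j))) *\<^sub>v E (Suc j)) $ s)"
        unfolding u_def using s Pc[OF Si] Ec[OF Si] At Vc
        by (simp del: index_mult_mat_vec)
    qed
    have S2: "hh j \<bullet> (P j *\<^sub>v E j - \<rho> \<cdot>\<^sub>v (transpose_mat (A j) *\<^sub>v V j)) + (A j *\<^sub>v hh j) \<bullet> \<eta> \<ge> 0"
      if jJ: "j \<in> {1..m-1}" for j
    proof -
      have jI: "j \<in> {1..m}" using jJ by auto
      define ck where "ck = (\<lambda>t. vsum l (\<lambda>i. A i *\<^sub>v x t i) ({1..m} - {j}) - b - (1 / \<rho>) \<cdot>\<^sub>v y t)"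
      have ckc: "ck t \<in> carrier_vec l" for t unfolding ck_def using b_dim yc by (simp add: vsum_carrier)
      have dimck: "dim_vec (ck t) = l" for t using ckc[of t] by (rule carrier_vecD)
      have AjC: "A j \<in> carrier_mat l (n j)" by (rule Ac[OF jI])
      have minv: "\<theta> j (x (Suc t) j) + \<rho> / 2 * sqnorm (A j *\<^sub>v x (Suc t) j + ck t) + 1 / 2 * qnorm (P j) (x (Suc t) j - x t j)
          \<le> \<theta> j z + \<rho> / 2 * sqnorm (A j *\<^sub>v z + ck t) + 1 / 2 * qnorm (P j) (z - x t j)" if zX: "z \<in> X j" for t z
      proof -
        have eq: "A j *\<^sub>v w + vsum l (\<lambda>i. A i *\<^sub>v x t i) ({1..m} - {j}) - b - (1 / \<rho>) \<cdot>\<^sub>v y t = A j *\<^sub>v w + ck t"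
          if "w \<in> carrier_vec (n j)" for w
          unfolding ck_def by (rule assoc4) (use AjC that b_dim yc in \<open>auto simp: vsum_carrier\<close>)
        have zc: "z \<in> carrier_vec (n j)" using Xc[OF jI] zX by blast
        have "\<theta> j (x (Suc t) j) + \<rho> / 2 * sqnorm (A j *\<^sub>v x (Suc t) j + vsum l (\<lambda>i. A i *\<^sub>v x t i) ({1..m} - {j}) - b - (1 / \<rho>) \<cdot>\<^sub>v y t) + 1 / 2 * qnorm (P j) (x (Suc t) j - x t j)
           \<le> \<theta> j z + \<rho> / 2 * sqnorm (A j *\<^sub>v z + vsum l (\<lambda>i. A i *\<^sub>v x t i) ({1..m} - {j}) - b - (1 / \<rho>) \<cdot>\<^sub>v y t) + 1 / 2 * qnorm (P j) (z - x t j)"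
          using x_step jJ zX by blast
        then show ?thesis by (simp only: eq[OF zc] eq[OF xc[OF jI]])
      qed
      have cfj: "convex_fun_vec (n j) (\<theta> j)" using theta_conv jI by blast
      have csj: "convex_set_vec (n j) (X j)" using X_conv jI by blast
      have vi1: "\<theta> j (x (Suc (Suc k)) j) - \<theta> j (x (Suc k) j)
          + \<rho> * ((A j *\<^sub>v (x (Suc (Suc k)) j - x (Suc k) j)) \<bullet> (A j *\<^sub>v x (Suc k) j + ck k))
          + (x (Suc (Suc k)) j - x (Suc k) j) \<bullet> (P j *\<^sub>v (x (Suc k) j - x k j)) \<ge> 0"
        by (rule vi_min[OF cfj csj xX[OF jI] xX[OF jI] AjC ckc Pc[OF jI] Ps[OF jI] xc[OF jI] minv])
      have vi2: "\<theta> j (x (Suc k) j) - \<theta> j (x (Suc (Suc k)) j)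
          + \<rho> * ((A j *\<^sub>v (x (Suc k) j - x (Suc (Suc k)) j)) \<bullet> (A j *\<^sub>v x (Suc (Suc k)) j + ck (Suc k)))
          + (x (Suc k) j - x (Suc (Suc k)) j) \<bullet> (P j *\<^sub>v (x (Suc (Suc k)) j - x (Suc k) j)) \<ge> 0"
        by (rule vi_min[OF cfj csj xX[OF jI] xX[OF jI] AjC ckc Pc[OF jI] Ps[OF jI] xc[OF jI] minv])
      have w1c: "A j *\<^sub>v x (Suc k) j + ck k \<in> carrier_vec l" using AjC xc[OF jI] ckc by simp
      have w2c: "A j *\<^sub>v x (Suc (Suc k)) j + ck (Suc k) \<in> carrier_vec l" using AjC xc[OF jI] ckc by simp
      note pair = vi_pair[OF vi1 vi2 xc[OF jI] xc[OF jI] xc[OF jI] AjC Pc[OF jI] w1c w2c]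
      have R1: "\<rho> \<cdot>\<^sub>v ((A j *\<^sub>v x (Suc (Suc k)) j + ck (Suc k)) - (A j *\<^sub>v x (Suc k) j + ck k)) = \<eta> - \<rho> \<cdot>\<^sub>v V j"
      proof (rule eq_vecI)
        fix r assume "r < dim_vec (\<eta> - \<rho> \<cdot>\<^sub>v V j)"
        then have r: "r < l" using carrier_vecD[OF Vc[of j]] by simp
        define J where "J = {1..m-1} - {j}"
        have finJ: "finite J" unfolding J_def by simp
        have mJ: "m \<notin> J" unfolding J_def using m2 by auto
        have JI: "i \<in> {1..m}" if "i \<in> J" for i using that unfolding J_def by auto
        have set1: "{1..m} - {j} = insert m J" unfolding J_def using jJ m2 by auto
        have sp2: "(\<Sum>i\<in>{1..m-1}. g i) = g j + (\<Sum>i\<in>J. g i)" for g :: "nat \<Rightarrow> real"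
          unfolding J_def by (rule sum.remove) (use jJ in auto)
        have ck_r: "ck t $ r = (A m *\<^sub>v x t m) $ r + (\<Sum>i\<in>J. (A i *\<^sub>v x t i) $ r) - b $ r - (1 / \<rho>) * y t $ r" for t
          unfolding ck_def set1 using r dimb dimy by (simp del: index_mult_mat_vec add: index_vsum finJ mJ)
        have W_r: "W t $ r = (A j *\<^sub>v x t j) $ r + (\<Sum>i\<in>J. (A i *\<^sub>v x t i) $ r)" for t
          unfolding W_def index_vsum[OF r] by (rule sp2)
        have V_r: "V j $ r = (\<Sum>i\<in>J. (A i *\<^sub>v x k i) $ r) - 2 * (\<Sum>i\<in>J. (A i *\<^sub>v x (Suc k) i) $ r)
            + (\<Sum>i\<in>J. (A i *\<^sub>v x (Suc (Suc k)) i) $ r)"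
        proof -
          have "V j $ r = (\<Sum>i\<in>J. (A i *\<^sub>v E i) $ r)"
            unfolding V_def J_def by (simp del: index_mult_mat_vec add: index_vsum[OF r])
          also have "\<dots> = (\<Sum>i\<in>J. (A i *\<^sub>v x k i) $ r - 2 * (A i *\<^sub>v x (Suc k) i) $ r + (A i *\<^sub>v x (Suc (Suc k)) i) $ r)"
            by (rule sum.cong) (use JI r AE_r in auto)
          also have "\<dots> = (\<Sum>i\<in>J. (A i *\<^sub>v x k i) $ r) - 2 * (\<Sum>i\<in>J. (A i *\<^sub>v x (Suc k) i) $ r)
            + (\<Sum>i\<in>J. (A i *\<^sub>v x (Suc (Suc k)) i) $ r)"
            by (simp add: sum.distrib sum_subtractf sum_distrib_left)
          finally show ?thesis .
        qed
        have lhs: "(\<rho> \<cdot>\<^sub>v ((A j *\<^sub>v x (Suc (Suc k)) j + ck (Suc k)) - (A j *\<^sub>v x (Suc k) j + ck k))) $ r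
            = \<rho> * ((A j *\<^sub>v x (Suc (Suc k)) j) $ r + ck (Suc k) $ r - ((A j *\<^sub>v x (Suc k) j) $ r + ck k $ r))"
          using r AjC dimck by (simp del: index_mult_mat_vec)
        have rhs: "(\<eta> - \<rho> \<cdot>\<^sub>v V j) $ r = ybar k $ r - ybar (Suc k) $ r - \<rho> * V j $ r"
          unfolding \<eta>_def using r dimyb Vc by (simp add: carrier_vecD[OF Vc])
        show "(\<rho> \<cdot>\<^sub>v ((A j *\<^sub>v x (Suc (Suc k)) j + ck (Suc k)) - (A j *\<^sub>v x (Suc k) j + ck k))) $ r = (\<eta> - \<rho> \<cdot>\<^sub>v V j) $ r"
          unfolding lhs rhs ck_r ybar_r[OF r] W_r V_r using rho_pos
          by (simp del: index_mult_mat_vec add: field_simps)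
      qed (use \<eta>c carrier_vecD[OF Vc[of j]] dimck in simp)
      have pair': "hh j \<bullet> (P j *\<^sub>v E j) + (A j *\<^sub>v hh j) \<bullet> (\<eta> - \<rho> \<cdot>\<^sub>v V j) \<ge> 0"
        unfolding hh_def E_def e_def R1[symmetric] by (rule pair)
      have PEc: "P j *\<^sub>v E j \<in> carrier_vec (n j)" using Pc[OF jI] Ec[OF jI] by simp
      have AtVc: "transpose_mat (A j) *\<^sub>v V j \<in> carrier_vec (n j)" using AjC Vc by simp
      have Ahc: "A j *\<^sub>v hh j \<in> carrier_vec l" using AjC hhc[OF jI] by simp
      have d1: "hh j \<bullet> (P j *\<^sub>v E j - \<rho> \<cdot>\<^sub>v (transpose_mat (A j) *\<^sub>v V j))
          = hh j \<bullet> (P j *\<^sub>v E j) - \<rho> * ((A j *\<^sub>v hh j) \<bullet> V j)"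
        using scalar_prod_minus_distrib[OF hhc[OF jI] PEc smult_carrier_vec[THEN iffD2, OF AtVc]]
          dotT[OF AjC hhc[OF jI] Vc] hhc[OF jI] AtVc by simp
      have d2: "(A j *\<^sub>v hh j) \<bullet> (\<eta> - \<rho> \<cdot>\<^sub>v V j) = (A j *\<^sub>v hh j) \<bullet> \<eta> - \<rho> * ((A j *\<^sub>v hh j) \<bullet> V j)"
        using scalar_prod_minus_distrib[OF Ahc \<eta>c smult_carrier_vec[THEN iffD2, OF Vc]] Ahc Vc by simp
      show ?thesis using pair' d1 d2 by linarith
    qed
    have S3: "hh m \<bullet> q1 + (A m *\<^sub>v hh m) \<bullet> \<eta> \<ge> 0"
    proof -
      define cm where "cm = (\<lambda>t. \<gamma> \<cdot>\<^sub>v W (Suc t) + (1 - \<gamma>) \<cdot>\<^sub>v (b - A m *\<^sub>v x t m) - b - (1 / \<rho>) \<cdot>\<^sub>v y t)"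
      have cmc: "cm t \<in> carrier_vec l" for t unfolding cm_def using b_dim yc Axc[OF mI] Wc by simp
      have dimcm: "dim_vec (cm t) = l" for t using cmc[of t] by (rule carrier_vecD)
      have minv: "\<theta> m (x (Suc t) m) + \<rho> / 2 * sqnorm (A m *\<^sub>v x (Suc t) m + cm t) + 1 / 2 * qnorm (P m) (x (Suc t) m - x t m)
          \<le> \<theta> m z + \<rho> / 2 * sqnorm (A m *\<^sub>v z + cm t) + 1 / 2 * qnorm (P m) (z - x t m)" if zX: "z \<in> X m" for t z
      proof -
        have eq: "\<gamma> \<cdot>\<^sub>v vsum l (\<lambda>i. A i *\<^sub>v x (Suc t) i) {1..m-1} + (1 - \<gamma>) \<cdot>\<^sub>v (b - A m *\<^sub>v x t m)
                                + A m *\<^sub>v w - b - (1 / \<rho>) \<cdot>\<^sub>v y t = A m *\<^sub>v w + cm t"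
          if "w \<in> carrier_vec (n m)" for w
          unfolding cm_def W_def by (rule assoc5) (use AmC that b_dim yc Axc[OF mI] in \<open>auto simp: vsum_carrier\<close>)
        have zc: "z \<in> carrier_vec (n m)" using Xc[OF mI] zX by blast
        have "\<theta> m (x (Suc t) m)
             + \<rho> / 2 * sqnorm (\<gamma> \<cdot>\<^sub>v vsum l (\<lambda>i. A i *\<^sub>v x (Suc t) i) {1..m-1} + (1 - \<gamma>) \<cdot>\<^sub>v (b - A m *\<^sub>v x t m)
                                + A m *\<^sub>v x (Suc t) m - b - (1 / \<rho>) \<cdot>\<^sub>v y t)
             + 1 / 2 * qnorm (P m) (x (Suc t) m - x t m)
           \<le> \<theta> m z
             + \<rho> / 2 * sqnorm (\<gamma> \<cdot>\<^sub>v vsum l (\<lambda>i. A i *\<^sub>v x (Suc t) i) {1..m-1} + (1 - \<gamma>) \<cdot>\<^sub>v (b - A m *\<^sub>v x t m)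
                                + A m *\<^sub>v z - b - (1 / \<rho>) \<cdot>\<^sub>v y t)
             + 1 / 2 * qnorm (P m) (z - x t m)"
          using xm_step zX by blast
        then show ?thesis by (simp only: eq[OF zc] eq[OF xc[OF mI]])
      qed
      have cfj: "convex_fun_vec (n m) (\<theta> m)" using theta_conv mI by blast
      have csj: "convex_set_vec (n m) (X m)" using X_conv mI by blast
      have vi1: "\<theta> m (x (Suc (Suc k)) m) - \<theta> m (x (Suc k) m)
          + \<rho> * ((A m *\<^sub>v (x (Suc (Suc k)) m - x (Suc k) m)) \<bullet> (A m *\<^sub>v x (Suc k) m + cm k))
          + (x (Suc (Suc k)) m - x (Suc k) m) \<bullet> (P m *\<^sub>v (x (Suc k) m - x k m)) \<ge> 0"
        by (rule vi_min[OF cfj csj xX[OF mI] xX[OF mI] AmC cmc PmC Ps[OF mI] xc[OF mI] minv])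
      have vi2: "\<theta> m (x (Suc k) m) - \<theta> m (x (Suc (Suc k)) m)
          + \<rho> * ((A m *\<^sub>v (x (Suc k) m - x (Suc (Suc k)) m)) \<bullet> (A m *\<^sub>v x (Suc (Suc k)) m + cm (Suc k)))
          + (x (Suc k) m - x (Suc (Suc k)) m) \<bullet> (P m *\<^sub>v (x (Suc (Suc k)) m - x (Suc k) m)) \<ge> 0"
        by (rule vi_min[OF cfj csj xX[OF mI] xX[OF mI] AmC cmc PmC Ps[OF mI] xc[OF mI] minv])
      have w1c: "A m *\<^sub>v x (Suc k) m + cm k \<in> carrier_vec l" using AmC xc[OF mI] cmc by simp
      have w2c: "A m *\<^sub>v x (Suc (Suc k)) m + cm (Suc k) \<in> carrier_vec l" using AmC xc[OF mI] cmc by simp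
      note pair = vi_pair[OF vi1 vi2 xc[OF mI] xc[OF mI] xc[OF mI] AmC PmC w1c w2c]
      have AEmc: "A m *\<^sub>v E m \<in> carrier_vec l" using AmC Ec[OF mI] by simp
      have Y3: "\<rho> \<cdot>\<^sub>v ((A m *\<^sub>v x (Suc (Suc k)) m + cm (Suc k)) - (A m *\<^sub>v x (Suc k) m + cm k))
          = \<rho> \<cdot>\<^sub>v (A m *\<^sub>v E m) + (1 - \<gamma>) \<cdot>\<^sub>v Dc + \<eta>"
      proof (rule eq_vecI)
        fix r assume "r < dim_vec (\<rho> \<cdot>\<^sub>v (A m *\<^sub>v E m) + (1 - \<gamma>) \<cdot>\<^sub>v Dc + \<eta>)"
        then have r: "r < l" using carrier_vecD[OF \<eta>c] by simp
        have cm_r: "cm t $ r = \<gamma> * W (Suc t) $ r + (1 - \<gamma>) * (b $ r - (A m *\<^sub>v x t m) $ r) - b $ r - (1 / \<rho>) * y t $ r" for t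
          unfolding cm_def using r dimb dimy dimW AmC by (simp del: index_mult_mat_vec)
        have lhs: "(\<rho> \<cdot>\<^sub>v ((A m *\<^sub>v x (Suc (Suc k)) m + cm (Suc k)) - (A m *\<^sub>v x (Suc k) m + cm k))) $ r
            = \<rho> * ((A m *\<^sub>v x (Suc (Suc k)) m) $ r + cm (Suc k) $ r - ((A m *\<^sub>v x (Suc k) m) $ r + cm k $ r))"
          using r AmC dimcm by (simp del: index_mult_mat_vec)
        have rhs: "(\<rho> \<cdot>\<^sub>v (A m *\<^sub>v E m) + (1 - \<gamma>) \<cdot>\<^sub>v Dc + \<eta>) $ r
            = \<rho> * (A m *\<^sub>v E m) $ r + (1 - \<gamma>) * (f k $ r - f (Suc k) $ r) + (ybar k $ r - ybar (Suc k) $ r)"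
          unfolding Dc_def \<eta>_def using r AmC carrier_vecD[OF fc] dimyb by (simp del: index_mult_mat_vec)
        show "(\<rho> \<cdot>\<^sub>v ((A m *\<^sub>v x (Suc (Suc k)) m + cm (Suc k)) - (A m *\<^sub>v x (Suc k) m + cm k))) $ r
            = (\<rho> \<cdot>\<^sub>v (A m *\<^sub>v E m) + (1 - \<gamma>) \<cdot>\<^sub>v Dc + \<eta>) $ r"
          unfolding lhs rhs cm_r f_r[OF r] ybar_r[OF r] AE_r[OF mI r] using rho_pos
          by (simp del: index_mult_mat_vec add: y_r[OF r] field_simps)
      qed (use \<eta>c AEmc Dcc dimcm in simp)
      have pair': "hh m \<bullet> (P m *\<^sub>v E m) + (A m *\<^sub>v hh m) \<bullet> (\<rho> \<cdot>\<^sub>v (A m *\<^sub>v E m) + (1 - \<gamma>) \<cdot>\<^sub>v Dc + \<eta>) \<ge> 0"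
        by (subst Y3[symmetric]) (unfold hh_def E_def e_def, rule pair)
      have hmc: "hh m \<in> carrier_vec (n m)" by (rule hhc[OF mI])
      have Ahc: "A m *\<^sub>v hh m \<in> carrier_vec l" using AmC hmc by simp
      have At: "transpose_mat (A m) \<in> carrier_mat (n m) l" using AmC by simp
      have c1: "transpose_mat (A m) *\<^sub>v (A m *\<^sub>v E m) \<in> carrier_vec (n m)" using At AEmc by simp
      have c2: "P m *\<^sub>v E m \<in> carrier_vec (n m)" using PmC Ec[OF mI] by simp
      have c3: "transpose_mat (A m) *\<^sub>v Dc \<in> carrier_vec (n m)" using At Dcc by simp
      have dq1: "hh m \<bullet> q1 = \<rho> * ((A m *\<^sub>v hh m) \<bullet> (A m *\<^sub>v E m)) + hh m \<bullet> (P m *\<^sub>v E m) + (1 - \<gamma>) * ((A m *\<^sub>v hh m) \<bullet> Dc)"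
        unfolding q1_def
        using hmc c1 c2 c3 dotT[OF AmC hmc AEmc] dotT[OF AmC hmc Dcc]
        by (simp add: scalar_prod_add_distrib[of _ "n m"])
      have dp: "(A m *\<^sub>v hh m) \<bullet> (\<rho> \<cdot>\<^sub>v (A m *\<^sub>v E m) + (1 - \<gamma>) \<cdot>\<^sub>v Dc + \<eta>)
          = \<rho> * ((A m *\<^sub>v hh m) \<bullet> (A m *\<^sub>v E m)) + (1 - \<gamma>) * ((A m *\<^sub>v hh m) \<bullet> Dc) + (A m *\<^sub>v hh m) \<bullet> \<eta>"
        using Ahc AEmc Dcc \<eta>c by (simp add: scalar_prod_add_distrib[of _ l])
      show ?thesis using pair' dq1 dp by linarith
    qed
    have Y2: "q2 = vsum l (\<lambda>i. A i *\<^sub>v hh i) {1..m}"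
    proof (rule eq_vecI)
      fix r assume "r < dim_vec (vsum l (\<lambda>i. A i *\<^sub>v hh i) {1..m})"
      then have r: "r < l" by (simp add: vsum_def)
      have sp3: "(\<Sum>i\<in>{1..m}. g i) = g m + (\<Sum>i\<in>{1..m-1}. g i)" for g :: "nat \<Rightarrow> real"
      proof -
        have "{1..m} = insert m {1..m-1}" using m2 by auto
        then show ?thesis using m2 by simp
      qed
      have W_r: "W t $ r = (\<Sum>i\<in>{1..m-1}. (A i *\<^sub>v x t i) $ r)" for t
        unfolding W_def by (rule index_vsum[OF r])
      have "vsum l (\<lambda>i. A i *\<^sub>v hh i) {1..m} $ r = (\<Sum>i\<in>{1..m}. (A i *\<^sub>v x (Suc k) i) $ r - (A i *\<^sub>v x (Suc (Suc k)) i) $ r)"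
        unfolding index_vsum[OF r] by (rule sum.cong) (use Ahh_r r in auto)
      also have "\<dots> = (\<Sum>i\<in>{1..m}. (A i *\<^sub>v x (Suc k) i) $ r) - (\<Sum>i\<in>{1..m}. (A i *\<^sub>v x (Suc (Suc k)) i) $ r)"
        by (rule sum_subtractf)
      also have "\<dots> = (A m *\<^sub>v x (Suc k) m) $ r + W (Suc k) $ r - ((A m *\<^sub>v x (Suc (Suc k)) m) $ r + W (Suc (Suc k)) $ r)"
        unfolding sp3 W_r ..
      finally have rhs: "vsum l (\<lambda>i. A i *\<^sub>v hh i) {1..m} $ r = \<dots>" .
      have lhs: "q2 $ r = - (A m *\<^sub>v E m) $ r + (1 / \<rho>) * (f k $ r - f (Suc k) $ r)"
        unfolding q2_def Dc_def using r AmC carrier_vecD[OF fc] by (simp del: index_mult_mat_vec)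
      show "q2 $ r = vsum l (\<lambda>i. A i *\<^sub>v hh i) {1..m} $ r"
        unfolding lhs rhs f_r[OF r] AE_r[OF mI r] using rho_pos
        by (simp del: index_mult_mat_vec add: field_simps)
    qed (simp add: q2_def vsum_def Dcc carrier_vecD[OF Dcc])
    have G1Dc: "G1 *\<^sub>v \<Delta>R \<in> carrier_vec (d3 0)" using G1c \<Delta>Rc d3 by simp
    have q1c: "q1 \<in> carrier_vec (d3 1)" unfolding q1_def using d3 AmC PmC Ec[OF mI] Dcc by simp
    have q2c: "q2 \<in> carrier_vec (d3 2)" unfolding q2_def using d3 AmC Ec[OF mI] Dcc by simp
    have wdot: "(wbar k - wbar (Suc k)) \<bullet> (Q *\<^sub>v \<Delta>)
        = stack_vec dR p (\<lambda>i. hh (Suc i)) \<bullet> (G1 *\<^sub>v \<Delta>R) + hh m \<bullet> q1 + \<eta> \<bullet> q2"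
      unfolding wbd QD by (rule w3_dot[OF G1Dc q1c q2c])
    have st: "stack_vec dR p (\<lambda>i. hh (Suc i)) \<bullet> (G1 *\<^sub>v \<Delta>R) = (\<Sum>i<p. hh (Suc i) \<bullet> u i)"
      unfolding G1D by (rule stack_dot) (use uc in \<open>auto simp: dR_def carrier_vecD\<close>)
    have yq: "\<eta> \<bullet> q2 = (\<Sum>i\<in>{1..m}. \<eta> \<bullet> (A i *\<^sub>v hh i))"
      unfolding Y2 by (rule dot_vsum[OF \<eta>c Ahhc])
    have split: "(\<Sum>i\<in>{1..m}. g i) = (\<Sum>i<p. g (Suc i)) + g m" for g :: "nat \<Rightarrow> real"
    proof -
      have "{1..m} = insert m {Suc 0..p}" using m2 unfolding p_def by auto
      then have "(\<Sum>i\<in>{1..m}. g i) = g m + (\<Sum>i\<in>{Suc 0..p}. g i)" unfolding p_def using m2 by simp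
      then show ?thesis by (simp add: sum.atLeast1_atMost_eq)
    qed
    have blk: "hh (Suc i) \<bullet> u i + \<eta> \<bullet> (A (Suc i) *\<^sub>v hh (Suc i)) \<ge> 0" if "i < p" for i
    proof -
      have J: "Suc i \<in> {1..m-1}" using that unfolding p_def by auto
      have "\<eta> \<bullet> (A (Suc i) *\<^sub>v hh (Suc i)) = (A (Suc i) *\<^sub>v hh (Suc i)) \<bullet> \<eta>"
        by (rule comm_scalar_prod[OF \<eta>c]) (use Ac[OF SucI[OF that]] hhc[OF SucI[OF that]] in simp)
      then show ?thesis using S2[OF J] unfolding u_def by simp
    qed
    have mb: "hh m \<bullet> q1 + \<eta> \<bullet> (A m *\<^sub>v hh m) \<ge> 0"
    proof -
      have "\<eta> \<bullet> (A m *\<^sub>v hh m) = (A m *\<^sub>v hh m) \<bullet> \<eta>"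
        by (rule comm_scalar_prod[OF \<eta>c]) (use AmC hhc[OF mI] in simp)
      then show ?thesis using S3 by simp
    qed
    have "(wbar k - wbar (Suc k)) \<bullet> (Q *\<^sub>v \<Delta>)
        = (\<Sum>i<p. hh (Suc i) \<bullet> u i + \<eta> \<bullet> (A (Suc i) *\<^sub>v hh (Suc i))) + (hh m \<bullet> q1 + \<eta> \<bullet> (A m *\<^sub>v hh m))"
      unfolding wdot st yq split sum.distrib by simp
    also have "\<dots> \<ge> 0"
    proof -
      have "(\<Sum>i<p. hh (Suc i) \<bullet> u i + \<eta> \<bullet> (A (Suc i) *\<^sub>v hh (Suc i))) \<ge> 0"
        using blk by (intro sum_nonneg) auto
      then show ?thesis using mb by linarith
    qed
    finally show ?thesis by simp
  qed
  have MtHM: "(transpose_mat M * H * M) *\<^sub>v \<Delta> = transpose_mat M *\<^sub>v (Q *\<^sub>v \<Delta>)"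
  proof -
    have MtH: "transpose_mat M * H \<in> carrier_mat N3 N3" using Mc Hc by simp
    have "(transpose_mat M * H * M) *\<^sub>v \<Delta> = (transpose_mat M * H) *\<^sub>v (M *\<^sub>v \<Delta>)"
      by (rule assoc_mult_mat_vec[OF MtH Mc \<Delta>c])
    also have "\<dots> = transpose_mat M *\<^sub>v (H *\<^sub>v (M *\<^sub>v \<Delta>))"
      by (rule assoc_mult_mat_vec) (use Mc Hc \<Delta>c in auto)
    finally show ?thesis unfolding HMQ .
  qed
  have L: "dlt k \<bullet> ((transpose_mat M * H * M) *\<^sub>v \<Delta>) = (wv k - wv (Suc k)) \<bullet> (Q *\<^sub>v \<Delta>)"
    unfolding MtHM dotT[OF Mc dltc[of k] QDc] Mdlt ..
  have R: "1 / 2 * qnorm (transpose_mat Q + Q) \<Delta> = \<Delta> \<bullet> (Q *\<^sub>v \<Delta>)"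
  proof -
    have "(transpose_mat Q + Q) *\<^sub>v \<Delta> = transpose_mat Q *\<^sub>v \<Delta> + Q *\<^sub>v \<Delta>"
      by (rule add_mult_distrib_mat_vec) (use Qc \<Delta>c in auto)
    then have "qnorm (transpose_mat Q + Q) \<Delta> = \<Delta> \<bullet> (transpose_mat Q *\<^sub>v \<Delta>) + \<Delta> \<bullet> (Q *\<^sub>v \<Delta>)"
      unfolding qnorm_def using Qc \<Delta>c by (simp add: scalar_prod_add_distrib[of _ N3])
    moreover have "\<Delta> \<bullet> (transpose_mat Q *\<^sub>v \<Delta>) = \<Delta> \<bullet> (Q *\<^sub>v \<Delta>)"
      using dotT[OF Qc \<Delta>c \<Delta>c] comm_scalar_prod[OF QDc \<Delta>c] by simp
    ultimately show ?thesis by simp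
  qed
  have V3: "(wv k - wv (Suc k)) = \<Delta> + (wbar k - wbar (Suc k))"
    unfolding \<Delta>_def dlt_def using w3c wv_eq wbar_eq
    by (intro eq_vecI) (auto simp: w3c[THEN carrier_vecD] wv_eq wbar_eq)
  have "(wv k - wv (Suc k)) \<bullet> (Q *\<^sub>v \<Delta>) = \<Delta> \<bullet> (Q *\<^sub>v \<Delta>) + (wbar k - wbar (Suc k)) \<bullet> (Q *\<^sub>v \<Delta>)"
    unfolding V3 by (rule add_scalar_prod_distrib) (use \<Delta>c QDc wv_eq wbar_eq w3c in auto)
  then show ?thesis using L R V4 unfolding \<Delta>_def by simp
qed


end
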